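(* Let $n,p,q\ge 1$, let $X\in\mathbb{R}^{n\times p}$ be deterministic, $B^*\in\mathbb{R}^{p\times q}$, $\sigma^*>0$, and $Y=XB^*+E$ where the entries of $E\in\mathbb{R}^{n\times q}$ are i.i.d. $\mathcal N(0,{\sigma^*}^2)$. Let $\mathcal S^*=\{j\in[p]: \|B^*_{j:}\|_2\neq 0\}$. Assume that $\Psi=\frac1n X^\top X$ satisfies $\Psi_{jj}=1$ for all $j\in[p]$ and $\max_{j'\neq j}|\Psi_{jj'}|\le \frac{1}{7\alpha s}$ for all $j\in[p]$, for some integer $s\ge 1$ with $|\mathcal S^*|\le s$ and some constant $\alpha>1$. Let $A>\sqrt2$ and $$\lambda=\frac{2\sqrt2}{\sqrt{nq}}\Big(1+A\sqrt{\tfrac{\log p}{q}}\Big),$$ and let $\eta>0$ satisfy $\lambda\|B^*\|_{2,1}\le \eta\sigma^*$. Let $\hat B$ be either (a) (multitask square-root Lasso) any minimizer over $B\in\mathbb{R}^{p\times q}$ of $\frac{1}{\sqrt{nq}}\|Y-XB\|_F+\lambda\|B\|_{2,1}$; or (b) (smoothed multitask square-root Lasso) for a parameter $\sigma_{\min}$ with $0<\sigma_{\min}\le \sigma^*/\sqrt2$, the $B$-component of any minimizer $(\hat B,\hat\sigma)$ over $B\in\mathbb{R}^{p\times q}$, $\sigma\ge\sigma_{\min}$ of $\frac{1}{2nq\sigma}\|Y-XB\|_F^2+\frac{\sigma}{2}+\lambda\|B\|_{2,1}$. Let $C=1+\frac{16}{7(\alpha-1)}$. Then, with probability at least $1-p^{1-A^2/2}-(1+e^2)e^{-nq/24}$,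 the following holds: $$\tfrac1q\|\hat B-B^*\|_{2,\infty}\le C(3+\eta)\lambda\sigma^*,$$ and moreover, if $\min_{j\in\mathcal S^*}\frac1q\|B^*_{j:}\|_2>2C(3+\eta)\lambda\sigma^*$, then the set $\hat{\mathcal S}=\{j\in[p]: \frac1q\|\hat B_{j:}\|_2> C(3+\eta)\lambda\sigma^*\}$ satisfies $\hat{\mathcal S}=\mathcal S^*$.
   Context: For $M\in\mathbb{R}^{p\times q}$, $M_{j:}$ denotes its $j$-th row, $\|M\|_{2,1}=\sum_j\|M_{j:}\|_2$ and $\|M\|_{2,\infty}=\max_j\|M_{j:}\|_2$; $\|\cdot\|_F$ is the Frobenius norm; $[p]=\{1,\dots,p\}$. *)

theory Defs
  imports "HOL-Probability.Probability"
begin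

text \<open>Matrices are represented as functions nat => nat => real; only the entries
  with indices in range (rows < number of rows, columns < number of columns) matter.\<close>

definition row_norm :: "nat \<Rightarrow> (nat \<Rightarrow> nat \<Rightarrow> real) \<Rightarrow> nat \<Rightarrow> real" where
  "row_norm q M j = sqrt (\<Sum>k<q. (M j k)\<^sup>2)"

definition norm21 :: "nat \<Rightarrow> nat \<Rightarrow> (nat \<Rightarrow> nat \<Rightarrow> real) \<Rightarrow> real" where
  "norm21 p q M = (\<Sum>j<p. row_norm q M j)"

definition norm2inf :: "nat \<Rightarrow> nat \<Rightarrow> (nat \<Rightarrow> nat \<Rightarrow> real) \<Rightarrow> real" where
  "norm2inf p q M = Max ((\<lambda>j. row_norm q M j) ` {..<p})"

definition fro :: "nat \<Rightarrow> nat \<Rightarrow> (nat \<Rightarrow> nat \<Rightarrow> real) \<Rightarrow> real" where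
  "fro n q M = sqrt (\<Sum>i<n. \<Sum>k<q. (M i k)\<^sup>2)"

definition matmul :: "nat \<Rightarrow> (nat \<Rightarrow> nat \<Rightarrow> real) \<Rightarrow> (nat \<Rightarrow> nat \<Rightarrow> real) \<Rightarrow> (nat \<Rightarrow> nat \<Rightarrow> real)" where
  "matmul p X B = (\<lambda>i k. \<Sum>j<p. X i j * B j k)"

definition msub :: "(nat \<Rightarrow> nat \<Rightarrow> real) \<Rightarrow> (nat \<Rightarrow> nat \<Rightarrow> real) \<Rightarrow> (nat \<Rightarrow> nat \<Rightarrow> real)" where
  "msub M N = (\<lambda>i k. M i k - N i k)"

definition gram :: "nat \<Rightarrow> (nat \<Rightarrow> nat \<Rightarrow> real) \<Rightarrow> nat \<Rightarrow> nat \<Rightarrow> real" where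
  "gram n X j j' = (1 / real n) * (\<Sum>i<n. X i j * X i j')"

definition obs :: "nat \<Rightarrow> (nat \<Rightarrow> nat \<Rightarrow> real) \<Rightarrow> (nat \<Rightarrow> nat \<Rightarrow> real) \<Rightarrow> (nat \<times> nat \<Rightarrow> real)
    \<Rightarrow> (nat \<Rightarrow> nat \<Rightarrow> real)" where
  "obs p X Bs E = (\<lambda>i k. (\<Sum>j<p. X i j * Bs j k) + E (i, k))"

definition sqrt_lasso_obj :: "nat \<Rightarrow> nat \<Rightarrow> nat \<Rightarrow> (nat \<Rightarrow> nat \<Rightarrow> real) \<Rightarrow> (nat \<Rightarrow> nat \<Rightarrow> real)
    \<Rightarrow> real \<Rightarrow> (nat \<Rightarrow> nat \<Rightarrow> real) \<Rightarrow> real" where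
  "sqrt_lasso_obj n p q X Y lam B =
     fro n q (msub Y (matmul p X B)) / sqrt (real n * real q) + lam * norm21 p q B"

definition smooth_obj :: "nat \<Rightarrow> nat \<Rightarrow> nat \<Rightarrow> (nat \<Rightarrow> nat \<Rightarrow> real) \<Rightarrow> (nat \<Rightarrow> nat \<Rightarrow> real)
    \<Rightarrow> real \<Rightarrow> (nat \<Rightarrow> nat \<Rightarrow> real) \<Rightarrow> real \<Rightarrow> real" where
  "smooth_obj n p q X Y lam B \<sigma> =
     (fro n q (msub Y (matmul p X B)))\<^sup>2 / (2 * real n * real q * \<sigma>) + \<sigma> / 2 + lam * norm21 p q B"

definition noise_measure :: "nat \<Rightarrow> nat \<Rightarrow> real \<Rightarrow> (nat \<times> nat \<Rightarrow> real) measure" where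
  "noise_measure n q \<sigma> = PiM ({..<n} \<times> {..<q}) (\<lambda>_. density lborel (normal_density 0 \<sigma>))"

definition good_estimate :: "nat \<Rightarrow> nat \<Rightarrow> (nat \<Rightarrow> nat \<Rightarrow> real) \<Rightarrow> (nat \<Rightarrow> nat \<Rightarrow> real) \<Rightarrow> real \<Rightarrow> bool" where
  "good_estimate p q Bs Bh t \<longleftrightarrow>
     norm2inf p q (msub Bh Bs) / real q \<le> t \<and>
     ((\<forall>j<p. row_norm q Bs j \<noteq> 0 \<longrightarrow> row_norm q Bs j / real q > 2 * t) \<longrightarrow>
       {j. j < p \<and> row_norm q Bh j / real q > t} = {j. j < p \<and> row_norm q Bs j \<noteq> 0})"

end

theory Submission
  imports Defs "HOL-Probability.Probability"
begin

lemma normal_density_0_eq: "\<sigma> > 0 \<Longrightarrow> normal_density 0 \<sigma> x = exp (- x\<^sup>2 / (2 * \<sigma>\<^sup>2)) / (sqrt (2*pi) * \<sigma>)"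
  unfolding normal_density_def by (simp add: real_sqrt_mult)

lemma normal_density_mult_exp_sq:
  fixes \<sigma> s :: real
  assumes "\<sigma> > 0" "2 * s * \<sigma>\<^sup>2 < 1"
  defines "\<sigma>' \<equiv> \<sigma> / sqrt (1 - 2 * s * \<sigma>\<^sup>2)"
  shows "normal_density 0 \<sigma> x * exp (s * x\<^sup>2) = (\<sigma>' / \<sigma>) * normal_density 0 \<sigma>' x"
proof -
  define c where "c = 1 - 2 * s * \<sigma>\<^sup>2"
  have c: "c > 0" using assms c_def by simp
  have s1: "\<sigma>'\<^sup>2 = \<sigma>\<^sup>2 / c" unfolding \<sigma>'_def c_def[symmetric] using c by (simp add: power_divide)
  have sp: "\<sigma>' > 0" unfolding \<sigma>'_def using assms c c_def by simp
  have e: "- x\<^sup>2 / (2 * \<sigma>\<^sup>2) + s * x\<^sup>2 = - x\<^sup>2 / (2 * \<sigma>'\<^sup>2)"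
    unfolding s1 c_def using assms by (simp add: field_simps)
  have "normal_density 0 \<sigma> x * exp (s * x\<^sup>2) = exp (- x\<^sup>2 / (2 * \<sigma>\<^sup>2) + s * x\<^sup>2) / (sqrt (2*pi) * \<sigma>)"
    using assms by (simp add: normal_density_0_eq mult_exp_exp)
  also have "\<dots> = exp (- x\<^sup>2 / (2 * \<sigma>'\<^sup>2)) / (sqrt (2*pi) * \<sigma>)" by (simp only: e)
  also have "\<dots> = (\<sigma>' / \<sigma>) * (exp (- x\<^sup>2 / (2 * \<sigma>'\<^sup>2)) / (sqrt (2*pi) * \<sigma>'))"
    using sp assms by (simp add: field_simps)
  also have "\<dots> = (\<sigma>' / \<sigma>) * normal_density 0 \<sigma>' x" using sp by (simp add: normal_density_0_eq)
  finally show ?thesis .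
qed

lemma nn_integral_normal_exp_sq:
  fixes \<sigma> s :: real
  assumes "\<sigma> > 0" "2 * s * \<sigma>\<^sup>2 < 1"
  shows "(\<integral>\<^sup>+x. ennreal (exp (s * x\<^sup>2)) \<partial>density lborel (normal_density 0 \<sigma>))
         = ennreal ((1 - 2 * s * \<sigma>\<^sup>2) powr (-1/2))"
proof -
  define \<sigma>' where "\<sigma>' = \<sigma> / sqrt (1 - 2 * s * \<sigma>\<^sup>2)"
  have c: "1 - 2 * s * \<sigma>\<^sup>2 > 0" using assms by simp
  have sp: "\<sigma>' > 0" unfolding \<sigma>'_def using assms c by simp
  have "(\<integral>\<^sup>+x. ennreal (exp (s * x\<^sup>2)) \<partial>density lborel (normal_density 0 \<sigma>))
      = (\<integral>\<^sup>+x. ennreal (normal_density 0 \<sigma> x) * ennreal (exp (s * x\<^sup>2)) \<partial>lborel)"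
    by (subst nn_integral_density) auto
  also have "\<dots> = (\<integral>\<^sup>+x. ennreal (\<sigma>' / \<sigma>) * ennreal (normal_density 0 \<sigma>' x) \<partial>lborel)"
    using normal_density_mult_exp_sq[OF assms] sp assms
    by (intro nn_integral_cong) (simp add: \<sigma>'_def ennreal_mult'[symmetric])
  also have "\<dots> = ennreal (\<sigma>' / \<sigma>) * (\<integral>\<^sup>+x. ennreal (normal_density 0 \<sigma>' x) \<partial>lborel)"
    by (subst nn_integral_cmult) auto
  also have "(\<integral>\<^sup>+x. ennreal (normal_density 0 \<sigma>' x) \<partial>lborel) = 1"
    using sp by (subst nn_integral_eq_integral) (auto simp: integrable_normal_density integral_normal_density)
  also have "\<sigma>' / \<sigma> = (1 - 2 * s * \<sigma>\<^sup>2) powr (-1/2)"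
    using assms c unfolding \<sigma>'_def by (simp add: powr_minus_divide powr_half_sqrt[symmetric] divide_simps powr_minus)
  finally show ?thesis by simp
qed

lemma meas_coord:
  fixes N :: "real measure"
  assumes "sets N = sets borel"
  shows "(\<lambda>\<omega>. \<omega> x) \<in> borel_measurable (PiM I (\<lambda>_. N))"
proof (cases "x \<in> I")
  case True
  have 1: "(\<lambda>\<omega>. \<omega> x) \<in> measurable (PiM I (\<lambda>_. N)) N"
    using True by (rule measurable_component_singleton)
  have 2: "measurable (PiM I (\<lambda>_. N)) N = borel_measurable (PiM I (\<lambda>_. N))"
    by (rule measurable_cong_sets[OF refl assms])
  show ?thesis using 1 unfolding 2 .
next
  case False
  have c: "(\<lambda>\<omega>. undefined::real) \<in> borel_measurable (PiM I (\<lambda>_. N))"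
    by (rule measurable_const) simp
  show ?thesis
    by (rule measurable_cong[THEN iffD2, OF _ c]) (use False in \<open>auto simp: space_PiM PiE_def extensional_def\<close>)
qed

lemma coord_distr:
  assumes "prob_space N" "x \<in> I"
  shows "distr (PiM I (\<lambda>_. N)) N (\<lambda>\<omega>. \<omega> x) = N"
  using distr_PiM_component[of I "\<lambda>_. N" x] assms by simp

lemma distr_coord_borel:
  fixes N :: "real measure"
  assumes "prob_space N" "sets N = sets borel" "x \<in> I"
  shows "distr (PiM I (\<lambda>_. N)) borel (\<lambda>\<omega>. \<omega> x) = N"
proof -
  have "distr (PiM I (\<lambda>_. N)) borel (\<lambda>\<omega>. \<omega> x) = distr (PiM I (\<lambda>_. N)) N (\<lambda>\<omega>. \<omega> x)"
    using assms(2) by (rule distr_cong[OF refl, symmetric]) simp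
  also have "\<dots> = N" using coord_distr[OF assms(1,3)] .
  finally show ?thesis .
qed

lemma distr_reindex_borel:
  fixes N :: "real measure"
  assumes "inj_on f J" "f ` J \<subseteq> I" "prob_space N" "sets N = sets borel"
  shows "distr (PiM I (\<lambda>_. N)) (PiM J (\<lambda>_. borel)) (\<lambda>\<omega>. \<lambda>j\<in>J. \<omega> (f j)) = PiM J (\<lambda>_. N)"
proof -
  have s: "sets (PiM J (\<lambda>_. N)) = sets (PiM J (\<lambda>_. borel))"
    using assms(4) by (intro sets_PiM_cong) auto
  have "distr (PiM I (\<lambda>_. N)) (PiM J (\<lambda>_. borel)) (\<lambda>\<omega>. \<lambda>j\<in>J. \<omega> (f j))
      = distr (PiM I (\<lambda>_. N)) (PiM J (\<lambda>_. N)) (\<lambda>\<omega>. \<lambda>j\<in>J. \<omega> (f j))"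
    using s by (rule distr_cong[OF refl, symmetric]) simp
  also have "\<dots> = PiM J (\<lambda>_. N)"
    by (rule distr_PiM_reindex[of I "\<lambda>_. N" f J, simplified]) (use assms(1,2,3) in auto)
  finally show ?thesis .
qed


lemma coord_indep:
  fixes N :: "real measure"
  assumes "inj_on f J" "f ` J \<subseteq> I" "J \<noteq> {}" "prob_space N" "sets N = sets borel"
  shows "prob_space.indep_vars (PiM I (\<lambda>_. N)) (\<lambda>_. borel) (\<lambda>j \<omega>. \<omega> (f j)) J"
proof -
  interpret P: prob_space "PiM I (\<lambda>_. N)"
    using assms by (intro prob_space_PiM) auto
  have rv: "P.random_variable borel (\<lambda>\<omega>. \<omega> (f j))" for j
    using meas_coord[OF assms(5), of "f j" I] by assumption
  have e: "PiM J (\<lambda>_. N) = PiM J (\<lambda>j. distr (PiM I (\<lambda>_. N)) borel (\<lambda>\<omega>. \<omega> (f j)))"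
  proof (rule PiM_cong[OF refl])
    fix j assume "j \<in> J"
    then have fj: "f j \<in> I" using assms(2) by auto
    show "N = distr (PiM I (\<lambda>_. N)) borel (\<lambda>\<omega>. \<omega> (f j))"
      using distr_coord_borel[OF assms(4,5) fj] by (rule sym)
  qed
  have "distr (PiM I (\<lambda>_. N)) (PiM J (\<lambda>_. borel)) (\<lambda>\<omega>. \<lambda>j\<in>J. \<omega> (f j))
      = PiM J (\<lambda>j. distr (PiM I (\<lambda>_. N)) borel (\<lambda>\<omega>. \<omega> (f j)))"
    using distr_reindex_borel[OF assms(1,2,4,5)] e by simp
  then show ?thesis
    using P.indep_vars_iff_distr_eq_PiM[OF assms(3) rv] by simp
qed

abbreviation gauss :: "real \<Rightarrow> real measure" where
  "gauss \<sigma> \<equiv> density lborel (normal_density 0 \<sigma>)"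

lemma gauss_prob: "\<sigma> > 0 \<Longrightarrow> prob_space (gauss \<sigma>)"
  by (rule prob_space_normal_density)

lemma gauss_sets: "sets (gauss \<sigma>) = sets borel"
  by simp

lemma coord_distributed:
  assumes "\<sigma> > 0" "x \<in> I"
  shows "distributed (PiM I (\<lambda>_. gauss \<sigma>)) lborel (\<lambda>\<omega>. \<omega> x) (normal_density 0 \<sigma>)"
  unfolding distributed_def
proof (intro conjI)
  have "distr (PiM I (\<lambda>_. gauss \<sigma>)) lborel (\<lambda>\<omega>. \<omega> x) = distr (PiM I (\<lambda>_. gauss \<sigma>)) borel (\<lambda>\<omega>. \<omega> x)"
    by (rule distr_cong) auto
  also have "\<dots> = gauss \<sigma>"
    by (rule distr_coord_borel[OF gauss_prob[OF assms(1)] gauss_sets assms(2)])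
  finally show "distr (PiM I (\<lambda>_. gauss \<sigma>)) lborel (\<lambda>\<omega>. \<omega> x) = density lborel (\<lambda>x. ennreal (normal_density 0 \<sigma> x))" .
  show "(\<lambda>x. ennreal (normal_density 0 \<sigma> x)) \<in> borel_measurable lborel" by simp
  have "(\<lambda>\<omega>. \<omega> x) \<in> borel_measurable (PiM I (\<lambda>_. gauss \<sigma>))"
    using meas_coord[OF gauss_sets, of x I] by assumption
  then show "(\<lambda>\<omega>. \<omega> x) \<in> measurable (PiM I (\<lambda>_. gauss \<sigma>)) lborel"
    by (simp add: measurable_lborel1)
qed

lemma lincomb_distributed:
  fixes x :: "nat \<Rightarrow> real"
  assumes "\<sigma> > 0" "k < q" "(\<Sum>i<n. (x i)\<^sup>2) = c" "c > 0"
  shows "distributed (PiM ({..<n} \<times> {..<q}) (\<lambda>_. gauss \<sigma>)) lborel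
           (\<lambda>\<omega>. \<Sum>i<n. x i * \<omega> (i, k)) (normal_density 0 (\<sigma> * sqrt c))"
proof -
  let ?M = "PiM ({..<n} \<times> {..<q}) (\<lambda>_. gauss \<sigma>)"
  interpret P: prob_space ?M
    using gauss_prob[OF assms(1)] by (intro prob_space_PiM) auto
  define S where "S = {i. i < n \<and> x i \<noteq> 0}"
  have finS: "finite S" unfolding S_def by auto
  have Sne: "S \<noteq> {}"
  proof
    assume "S = {}"
    then have "\<forall>i<n. x i = 0" unfolding S_def by auto
    then have "(\<Sum>i<n. (x i)\<^sup>2) = 0" by simp
    then show False using assms by simp
  qed
  have ind0: "P.indep_vars (\<lambda>_. borel) (\<lambda>i \<omega>. \<omega> (i, k)) S"
    by (rule coord_indep[OF _ _ Sne gauss_prob[OF assms(1)] gauss_sets])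
       (auto simp: inj_on_def S_def assms(2))
  have ind: "P.indep_vars (\<lambda>_. borel) (\<lambda>i \<omega>. x i * \<omega> (i, k)) S"
    using P.indep_vars_compose2[OF ind0, of "\<lambda>i z. x i * z" "\<lambda>_. borel"] by simp
  have dist: "distributed ?M lborel (\<lambda>\<omega>. x i * \<omega> (i, k)) (normal_density 0 (\<bar>x i\<bar> * \<sigma>))"
    if "i \<in> S" for i
  proof -
    have "(i, k) \<in> {..<n} \<times> {..<q}" using that assms(2) by (auto simp: S_def)
    from P.normal_density_affine[OF coord_distributed[OF assms(1) this] assms(1), of "x i" 0]
    show ?thesis using that by (simp add: S_def)
  qed
  have "distributed ?M lborel (\<lambda>\<omega>. \<Sum>i\<in>S. x i * \<omega> (i, k))
          (normal_density (\<Sum>i\<in>S. 0) (sqrt (\<Sum>i\<in>S. (\<bar>x i\<bar> * \<sigma>)\<^sup>2)))"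
    by (rule P.sum_indep_normal[OF finS Sne ind]) (use assms(1) dist in \<open>auto simp: S_def\<close>)
  moreover have "(\<lambda>\<omega>. \<Sum>i\<in>S. x i * \<omega> (i, k)) = (\<lambda>\<omega>. \<Sum>i<n. x i * \<omega> (i, k))"
    by (intro ext sum.mono_neutral_left) (auto simp: S_def)
  moreover have "(\<Sum>i\<in>S. (\<bar>x i\<bar> * \<sigma>)\<^sup>2) = \<sigma>\<^sup>2 * c"
  proof -
    have "(\<Sum>i\<in>S. (\<bar>x i\<bar> * \<sigma>)\<^sup>2) = (\<Sum>i<n. (\<bar>x i\<bar> * \<sigma>)\<^sup>2)"
      by (intro sum.mono_neutral_left) (auto simp: S_def)
    also have "\<dots> = \<sigma>\<^sup>2 * (\<Sum>i<n. (x i)\<^sup>2)"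
      by (simp add: sum_distrib_left power_mult_distrib mult.commute)
    finally show ?thesis using assms(3) by simp
  qed
  moreover have "sqrt (\<sigma>\<^sup>2 * c) = \<sigma> * sqrt c" using assms(1) by (simp add: real_sqrt_mult)
  ultimately show ?thesis by simp
qed

lemma lincomb_mgf:
  fixes x :: "nat \<Rightarrow> real"
  assumes "\<sigma> > 0" "k < q" "(\<Sum>i<n. (x i)\<^sup>2) = c" "c > 0" "2 * s * (\<sigma>\<^sup>2 * c) < 1"
  shows "(\<integral>\<^sup>+\<omega>. ennreal (exp (s * (\<Sum>i<n. x i * \<omega> (i, k))\<^sup>2)) \<partial>PiM ({..<n} \<times> {..<q}) (\<lambda>_. gauss \<sigma>))
         = ennreal ((1 - 2 * s * (\<sigma>\<^sup>2 * c)) powr (-1/2))"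
proof -
  have sp: "\<sigma> * sqrt c > 0" using assms by simp
  have sq: "(\<sigma> * sqrt c)\<^sup>2 = \<sigma>\<^sup>2 * c" using assms by (simp add: power_mult_distrib)
  have "(\<integral>\<^sup>+\<omega>. ennreal (exp (s * (\<Sum>i<n. x i * \<omega> (i, k))\<^sup>2)) \<partial>PiM ({..<n} \<times> {..<q}) (\<lambda>_. gauss \<sigma>))
      = (\<integral>\<^sup>+y. ennreal (normal_density 0 (\<sigma> * sqrt c) y) * ennreal (exp (s * y\<^sup>2)) \<partial>lborel)"
    by (rule distributed_nn_integral[OF lincomb_distributed[OF assms(1-4)], symmetric]) simp
  also have "\<dots> = (\<integral>\<^sup>+y. ennreal (exp (s * y\<^sup>2)) \<partial>gauss (\<sigma> * sqrt c))"
    by (subst nn_integral_density) auto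
  also have "\<dots> = ennreal ((1 - 2 * s * (\<sigma> * sqrt c)\<^sup>2) powr (-1/2))"
    by (rule nn_integral_normal_exp_sq[OF sp]) (use assms(5) sq in simp)
  finally show ?thesis using sq by simp
qed

lemma column_mgf:
  fixes x :: "nat \<Rightarrow> real"
  assumes "\<sigma> > 0" "n \<ge> 1" "q \<ge> 1" "(\<Sum>i<n. (x i)\<^sup>2) = c" "c > 0" "2 * s * (\<sigma>\<^sup>2 * c) < 1"
  shows "(\<integral>\<^sup>+\<omega>. ennreal (exp (s * (\<Sum>k<q. (\<Sum>i<n. x i * \<omega> (i, k))\<^sup>2))) \<partial>PiM ({..<n} \<times> {..<q}) (\<lambda>_. gauss \<sigma>))
         = ennreal (((1 - 2 * s * (\<sigma>\<^sup>2 * c)) powr (-1/2)) ^ q)"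
proof -
  let ?I = "{..<n} \<times> {..<q}"
  let ?M = "PiM ?I (\<lambda>_. gauss \<sigma>)"
  interpret P: prob_space ?M
    using gauss_prob[OF assms(1)] by (intro prob_space_PiM) auto
  have "(0, 0) \<in> ?I" using assms by auto
  then have Ine: "?I \<noteq> {}" by blast
  have ind0: "P.indep_vars (\<lambda>_. borel) (\<lambda>ij \<omega>. \<omega> (id ij)) ?I"
    by (rule coord_indep[OF _ _ Ine gauss_prob[OF assms(1)] gauss_sets]) auto
  define K where "K k = {..<n} \<times> {k}" for k :: nat
  have ind1: "P.indep_vars (\<lambda>k. PiM (K k) (\<lambda>_. borel)) (\<lambda>k \<omega>. restrict (\<lambda>ij. \<omega> (id ij)) (K k)) {..<q}"
    by (rule P.indep_vars_restrict[OF ind0]) (auto simp: K_def disjoint_family_on_def)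
  define Y where "Y k g = ennreal (exp (s * (\<Sum>i<n. x i * g (i, k))\<^sup>2))" for k and g :: "nat \<times> nat \<Rightarrow> real"
  have Ym: "Y k \<in> borel_measurable (PiM (K k) (\<lambda>_. borel))" for k
  proof -
    have "(\<lambda>g. g (i, k)) \<in> borel_measurable (PiM (K k) (\<lambda>_. (borel::real measure)))" for i
      using meas_coord[of "borel::real measure" "(i,k)" "K k"] by simp
    then show ?thesis unfolding Y_def by measurable
  qed
  have ind2: "P.indep_vars (\<lambda>_. borel) (\<lambda>k \<omega>. Y k (restrict (\<lambda>ij. \<omega> (id ij)) (K k))) {..<q}"
    by (rule P.indep_vars_compose2[OF ind1]) (rule Ym)
  have Yeq: "Y k (restrict (\<lambda>ij. \<omega> (id ij)) (K k)) = ennreal (exp (s * (\<Sum>i<n. x i * \<omega> (i, k))\<^sup>2))" for k \<omega>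
    unfolding Y_def K_def by simp
  have ind3: "P.indep_vars (\<lambda>_. borel) (\<lambda>k \<omega>. ennreal (exp (s * (\<Sum>i<n. x i * \<omega> (i, k))\<^sup>2))) {..<q}"
    using ind2 unfolding Yeq .
  have "(\<integral>\<^sup>+\<omega>. ennreal (exp (s * (\<Sum>k<q. (\<Sum>i<n. x i * \<omega> (i, k))\<^sup>2))) \<partial>?M)
      = (\<integral>\<^sup>+\<omega>. (\<Prod>k<q. ennreal (exp (s * (\<Sum>i<n. x i * \<omega> (i, k))\<^sup>2))) \<partial>?M)"
    by (intro nn_integral_cong) (simp add: prod_ennreal exp_sum sum_distrib_left)
  also have "\<dots> = (\<Prod>k<q. \<integral>\<^sup>+\<omega>. ennreal (exp (s * (\<Sum>i<n. x i * \<omega> (i, k))\<^sup>2)) \<partial>?M)"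
    by (rule P.indep_vars_nn_integral[OF _ ind3]) auto
  also have "\<dots> = (\<Prod>k<q. ennreal ((1 - 2 * s * (\<sigma>\<^sup>2 * c)) powr (-1/2)))"
    by (intro prod.cong refl lincomb_mgf[OF assms(1) _ assms(4-6)]) auto
  also have "\<dots> = ennreal (((1 - 2 * s * (\<sigma>\<^sup>2 * c)) powr (-1/2)) ^ q)"
    by (simp add: prod_ennreal ennreal_power)
  finally show ?thesis .
qed

lemma total_mgf:
  assumes "\<sigma> > 0" "2 * s * \<sigma>\<^sup>2 < 1"
  shows "(\<integral>\<^sup>+\<omega>. ennreal (exp (s * (\<Sum>ik\<in>{..<n} \<times> {..<q}. (\<omega> ik)\<^sup>2))) \<partial>PiM ({..<n} \<times> {..<q}) (\<lambda>_. gauss \<sigma>))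
         = ennreal (((1 - 2 * s * \<sigma>\<^sup>2) powr (-1/2)) ^ (n * q))"
proof -
  let ?I = "{..<n} \<times> {..<q}"
  interpret product_sigma_finite "\<lambda>_. gauss \<sigma>"
    unfolding product_sigma_finite_def using gauss_prob[OF assms(1)]
    by (simp add: prob_space_imp_sigma_finite)
  have "(\<integral>\<^sup>+\<omega>. ennreal (exp (s * (\<Sum>ik\<in>?I. (\<omega> ik)\<^sup>2))) \<partial>PiM ?I (\<lambda>_. gauss \<sigma>))
      = (\<integral>\<^sup>+\<omega>. (\<Prod>ik\<in>?I. (\<lambda>z. ennreal (exp (s * z\<^sup>2))) (\<omega> ik)) \<partial>PiM ?I (\<lambda>_. gauss \<sigma>))"
    by (intro nn_integral_cong) (simp add: prod_ennreal exp_sum sum_distrib_left)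
  also have "\<dots> = (\<Prod>ik\<in>?I. \<integral>\<^sup>+z. ennreal (exp (s * z\<^sup>2)) \<partial>gauss \<sigma>)"
    by (rule product_nn_integral_prod) auto
  also have "\<dots> = (\<Prod>ik\<in>?I. ennreal ((1 - 2 * s * \<sigma>\<^sup>2) powr (-1/2)))"
    using nn_integral_normal_exp_sq[OF assms] by simp
  also have "\<dots> = ennreal (((1 - 2 * s * \<sigma>\<^sup>2) powr (-1/2)) ^ (n * q))"
    by (simp add: prod_ennreal card_cartesian_product ennreal_power)
  finally show ?thesis .
qed

lemma meas_coord_gauss[measurable]: "(\<lambda>\<omega>. \<omega> x) \<in> borel_measurable (PiM I (\<lambda>_. gauss \<sigma>))"
  using meas_coord[OF gauss_sets, of x I \<sigma>] by assumption

lemma chernoff_ge_space: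
  fixes f :: "'a \<Rightarrow> real"
  assumes "s > 0" "f \<in> borel_measurable M"
  shows "emeasure M {x\<in>space M. f x \<ge> a} \<le> ennreal (exp (-s * a)) * (\<integral>\<^sup>+x. ennreal (exp (s * f x)) \<partial>M)"
proof -
  have "emeasure M {x\<in>space M. f x \<ge> a} \<le> ennreal (exp (-s * a)) * (\<integral>\<^sup>+x. ennreal (exp (s * f x)) * indicator (space M) x \<partial>M)"
    by (rule Chernoff_ineq_nn_integral_ge[OF assms(1)]) (use assms(2) in auto)
  also have "(\<integral>\<^sup>+x. ennreal (exp (s * f x)) * indicator (space M) x \<partial>M) = (\<integral>\<^sup>+x. ennreal (exp (s * f x)) \<partial>M)"
    by (intro nn_integral_cong) auto
  finally show ?thesis .
qed

lemma chernoff_le_space: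
  fixes f :: "'a \<Rightarrow> real"
  assumes "s > 0" "f \<in> borel_measurable M"
  shows "emeasure M {x\<in>space M. f x \<le> a} \<le> ennreal (exp (s * a)) * (\<integral>\<^sup>+x. ennreal (exp (-s * f x)) \<partial>M)"
proof -
  have "emeasure M {x\<in>space M. f x \<le> a} \<le> ennreal (exp (s * a)) * (\<integral>\<^sup>+x. ennreal (exp (-s * f x)) * indicator (space M) x \<partial>M)"
    by (rule Chernoff_ineq_nn_integral_le[OF assms(1)]) (use assms(2) in auto)
  also have "(\<integral>\<^sup>+x. ennreal (exp (-s * f x)) * indicator (space M) x \<partial>M) = (\<integral>\<^sup>+x. ennreal (exp (-s * f x)) \<partial>M)"
    by (intro nn_integral_cong) auto
  finally show ?thesis .
qed

lemma chernoff_col: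
  fixes x :: "nat \<Rightarrow> real" and n q :: nat
  assumes "\<sigma> > 0" "n \<ge> 1" "q \<ge> 1" "(\<Sum>i<n. (x i)\<^sup>2) = c" "c > 0" "r > 1"
  shows "emeasure (PiM ({..<n} \<times> {..<q}) (\<lambda>_. gauss \<sigma>))
           {\<omega>\<in>space (PiM ({..<n} \<times> {..<q}) (\<lambda>_. gauss \<sigma>)). \<sigma>\<^sup>2 * c * real q * r\<^sup>2 \<le> (\<Sum>k<q. (\<Sum>i<n. x i * \<omega> (i, k))\<^sup>2)}
         \<le> ennreal (exp (- real q * (r - 1)\<^sup>2 / 2))"
proof -
  let ?M = "PiM ({..<n} \<times> {..<q}) (\<lambda>_. gauss \<sigma>)"
  define s where "s = (1 - 1 / r\<^sup>2) / (2 * \<sigma>\<^sup>2 * c)"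
  have r2: "r\<^sup>2 > 1" using assms(6) by (simp add: one_less_power)
  have sp: "s > 0" unfolding s_def using assms r2 by (auto intro!: divide_pos_pos simp: field_simps)
  have ss: "2 * s * (\<sigma>\<^sup>2 * c) = 1 - 1 / r\<^sup>2" unfolding s_def using assms by (simp add: field_simps)
  have ss1: "2 * s * (\<sigma>\<^sup>2 * c) < 1" unfolding ss using r2 assms(6) by simp
  have "emeasure ?M {\<omega>\<in>space ?M. \<sigma>\<^sup>2 * c * real q * r\<^sup>2 \<le> (\<Sum>k<q. (\<Sum>i<n. x i * \<omega> (i, k))\<^sup>2)}
     \<le> ennreal (exp (-s * (\<sigma>\<^sup>2 * c * real q * r\<^sup>2))) * (\<integral>\<^sup>+\<omega>. ennreal (exp (s * (\<Sum>k<q. (\<Sum>i<n. x i * \<omega> (i, k))\<^sup>2))) \<partial>?M)"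
    by (rule chernoff_ge_space[OF sp]) measurable
  also have "(\<integral>\<^sup>+\<omega>. ennreal (exp (s * (\<Sum>k<q. (\<Sum>i<n. x i * \<omega> (i, k))\<^sup>2))) \<partial>?M)
      = ennreal (((1 - 2 * s * (\<sigma>\<^sup>2 * c)) powr (-1/2)) ^ q)"
    by (rule column_mgf[OF assms(1-5) ss1])
  also have "ennreal (exp (-s * (\<sigma>\<^sup>2 * c * real q * r\<^sup>2))) * ennreal (((1 - 2 * s * (\<sigma>\<^sup>2 * c)) powr (-1/2)) ^ q)
      = ennreal (exp (- (r\<^sup>2 - 1) * real q / 2) * r ^ q)"
  proof -
    have a: "s * (\<sigma>\<^sup>2 * c * real q * r\<^sup>2) = (r\<^sup>2 - 1) * real q / 2"
      unfolding s_def using assms r2 by (simp add: field_simps)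
    have b: "(1 - 2 * s * (\<sigma>\<^sup>2 * c)) powr (-1/2) = r"
    proof -
      have e: "(1 - 2 * s * (\<sigma>\<^sup>2 * c)) = 1 / r\<^sup>2" unfolding ss by simp
      have "(1 / r\<^sup>2) powr (-1/2) = 1 / ((1 / r\<^sup>2) powr (1/2))"
        by (simp add: powr_minus_divide)
      also have "\<dots> = 1 / sqrt (1 / r\<^sup>2)" using r2 by (simp add: powr_half_sqrt)
      also have "\<dots> = r" using assms(6) by (simp add: real_sqrt_divide)
      finally show ?thesis unfolding e .
    qed
    have a': "-s * (\<sigma>\<^sup>2 * c * real q * r\<^sup>2) = - (r\<^sup>2 - 1) * real q / 2" using a by (metis minus_mult_left minus_divide_left)
    show ?thesis unfolding a' b using assms(6) by (simp add: ennreal_mult'[symmetric] ennreal_power)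
  qed
  also have "exp (- (r\<^sup>2 - 1) * real q / 2) * r ^ q \<le> exp (- real q * (r - 1)\<^sup>2 / 2)"
  proof -
    have "r \<le> exp (r - 1)" using exp_ge_add_one_self[of "r - 1"] by simp
    then have "r ^ q \<le> exp (r - 1) ^ q" using assms(6) by (intro power_mono) auto
    also have "\<dots> = exp (real q * (r - 1))" by (simp add: exp_of_nat_mult[symmetric])
    finally have "exp (- (r\<^sup>2 - 1) * real q / 2) * r ^ q \<le> exp (- (r\<^sup>2 - 1) * real q / 2) * exp (real q * (r - 1))"
      by (intro mult_left_mono) auto
    also have "\<dots> = exp (- real q * (r - 1)\<^sup>2 / 2)"
    proof -
      have "- (r\<^sup>2 - 1) * real q / 2 + real q * (r - 1) = - real q * (r - 1)\<^sup>2 / 2"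
        by (simp add: power2_eq_square field_simps)
      then show ?thesis by (simp add: mult_exp_exp)
    qed
    finally show ?thesis .
  qed
  finally show ?thesis by (simp add: ennreal_leI)
qed

lemma powr_pow_exp: "x > 0 \<Longrightarrow> (x powr a) ^ m = exp (real m * a * ln x)"
  by (simp add: powr_def exp_of_nat_mult[symmetric] mult.assoc)

lemma chernoff_low:
  fixes n q :: nat
  assumes "\<sigma> > 0"
  shows "emeasure (PiM ({..<n} \<times> {..<q}) (\<lambda>_. gauss \<sigma>))
           {\<omega>\<in>space (PiM ({..<n} \<times> {..<q}) (\<lambda>_. gauss \<sigma>)). (\<Sum>ik\<in>{..<n} \<times> {..<q}. (\<omega> ik)\<^sup>2) \<le> real (n * q) * \<sigma>\<^sup>2 / 2}
         \<le> ennreal (exp (- real (n * q) / 24))"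
proof -
  let ?M = "PiM ({..<n} \<times> {..<q}) (\<lambda>_. gauss \<sigma>)"
  define s where "s = 1 / (2 * \<sigma>\<^sup>2)"
  have sp: "s > 0" unfolding s_def using assms by simp
  have "emeasure ?M {\<omega>\<in>space ?M. (\<Sum>ik\<in>{..<n} \<times> {..<q}. (\<omega> ik)\<^sup>2) \<le> real (n * q) * \<sigma>\<^sup>2 / 2}
      \<le> ennreal (exp (s * (real (n * q) * \<sigma>\<^sup>2 / 2))) * (\<integral>\<^sup>+\<omega>. ennreal (exp (-s * (\<Sum>ik\<in>{..<n} \<times> {..<q}. (\<omega> ik)\<^sup>2))) \<partial>?M)"
    by (rule chernoff_le_space[OF sp]) measurable
  also have "(\<integral>\<^sup>+\<omega>. ennreal (exp (-s * (\<Sum>ik\<in>{..<n} \<times> {..<q}. (\<omega> ik)\<^sup>2))) \<partial>?M)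
     = ennreal (((1 - 2 * (-s) * \<sigma>\<^sup>2) powr (-1/2)) ^ (n * q))"
  proof (rule total_mgf[OF assms])
    have "0 < s * \<sigma>\<^sup>2" using sp assms by simp
    then show "2 * (-s) * \<sigma>\<^sup>2 < 1" by linarith
  qed
  also have "(1 - 2 * (-s) * \<sigma>\<^sup>2) = 2" unfolding s_def using assms by simp
  also have "s * (real (n * q) * \<sigma>\<^sup>2 / 2) = real (n * q) / 4" unfolding s_def using assms by simp
  also have "ennreal (exp (real (n * q) / 4)) * ennreal ((2 powr (-1/2)) ^ (n * q))
      = ennreal (exp (real (n * q) / 4 - real (n * q) * ln 2 / 2))"
  proof -
    have "((2::real) powr (-1/2)) ^ (n * q) = exp (- (real (n * q) * ln 2 / 2))"
      by (simp add: powr_pow_exp)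
    then show ?thesis by (simp add: ennreal_mult'[symmetric] mult_exp_exp)
  qed
  also have "\<dots> \<le> ennreal (exp (- real (n * q) / 24))"
  proof (intro ennreal_leI exp_mono)
    have "real (n * q) * (7/12) \<le> real (n * q) * ln 2"
      using ln2_ge_two_thirds by (intro mult_left_mono) auto
    moreover have "0 \<le> real (n * q)" by simp
    ultimately show "real (n * q) / 4 - real (n * q) * ln 2 / 2 \<le> - real (n * q) / 24" by linarith
  qed
  finally show ?thesis .
qed

lemma chernoff_high:
  fixes n q :: nat
  assumes "\<sigma> > 0"
  shows "emeasure (PiM ({..<n} \<times> {..<q}) (\<lambda>_. gauss \<sigma>))
           {\<omega>\<in>space (PiM ({..<n} \<times> {..<q}) (\<lambda>_. gauss \<sigma>)). 4 * real (n * q) * \<sigma>\<^sup>2 \<le> (\<Sum>ik\<in>{..<n} \<times> {..<q}. (\<omega> ik)\<^sup>2)}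
         \<le> ennreal (exp (- real (n * q) / 24))"
proof -
  let ?M = "PiM ({..<n} \<times> {..<q}) (\<lambda>_. gauss \<sigma>)"
  define s where "s = 1 / (4 * \<sigma>\<^sup>2)"
  have sp: "s > 0" unfolding s_def using assms by simp
  have "emeasure ?M {\<omega>\<in>space ?M. 4 * real (n * q) * \<sigma>\<^sup>2 \<le> (\<Sum>ik\<in>{..<n} \<times> {..<q}. (\<omega> ik)\<^sup>2)}
      \<le> ennreal (exp (-s * (4 * real (n * q) * \<sigma>\<^sup>2))) * (\<integral>\<^sup>+\<omega>. ennreal (exp (s * (\<Sum>ik\<in>{..<n} \<times> {..<q}. (\<omega> ik)\<^sup>2))) \<partial>?M)"
    by (rule chernoff_ge_space[OF sp]) measurable
  also have "(\<integral>\<^sup>+\<omega>. ennreal (exp (s * (\<Sum>ik\<in>{..<n} \<times> {..<q}. (\<omega> ik)\<^sup>2))) \<partial>?M)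
     = ennreal (((1 - 2 * s * \<sigma>\<^sup>2) powr (-1/2)) ^ (n * q))"
    by (rule total_mgf[OF assms]) (use assms in \<open>simp add: s_def\<close>)
  also have "(1 - 2 * s * \<sigma>\<^sup>2) = 1/2" unfolding s_def using assms by simp
  also have "-s * (4 * real (n * q) * \<sigma>\<^sup>2) = - real (n * q)" unfolding s_def using assms by simp
  also have "ennreal (exp (- real (n * q))) * ennreal (((1/2) powr (-1/2)) ^ (n * q))
      = ennreal (exp (- real (n * q) + real (n * q) * ln 2 / 2))"
  proof -
    have "((1/2::real) powr (-1/2)) ^ (n * q) = exp (real (n * q) * ln 2 / 2)"
      by (simp add: powr_pow_exp ln_div)
    then show ?thesis by (simp add: ennreal_mult'[symmetric] mult_exp_exp)
  qed
  also have "\<dots> \<le> ennreal (exp (- real (n * q) / 24))"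
  proof (intro ennreal_leI exp_mono)
    have "real (n * q) * ln 2 \<le> real (n * q) * 1"
      using ln_2_less_1 by (intro mult_left_mono) auto
    moreover have "0 \<le> real (n * q)" by simp
    ultimately show "- real (n * q) + real (n * q) * ln 2 / 2 \<le> - real (n * q) / 24" by linarith
  qed
  finally show ?thesis .
qed

lemma row_norm_L2: "row_norm q M j = L2_set (M j) {..<q}"
  unfolding row_norm_def L2_set_def by simp

lemma fro_L2: "fro n q M = L2_set (\<lambda>(i,k). M i k) ({..<n} \<times> {..<q})"
  unfolding fro_def L2_set_def by (simp add: sum.cartesian_product case_prod_beta)

lemma L2_set_sum_le:
  assumes "finite J"
  shows "L2_set (\<lambda>k. \<Sum>j\<in>J. f j k) K \<le> (\<Sum>j\<in>J. L2_set (f j) K)"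
  using assms
proof (induction J rule: finite_induct)
  case empty
  then show ?case by (simp add: L2_set_0')
next
  case (insert x F)
  have "L2_set (\<lambda>k. \<Sum>j\<in>insert x F. f j k) K = L2_set (\<lambda>k. f x k + (\<Sum>j\<in>F. f j k)) K"
    using insert by simp
  also have "\<dots> \<le> L2_set (f x) K + L2_set (\<lambda>k. \<Sum>j\<in>F. f j k) K"
    by (rule L2_set_triangle_ineq)
  also have "\<dots> \<le> L2_set (f x) K + (\<Sum>j\<in>F. L2_set (f j) K)"
    using insert by simp
  finally show ?case using insert by simp
qed

lemma L2_set_scale: "L2_set (\<lambda>k. c * f k) K = \<bar>c\<bar> * L2_set f K"
proof -
  have "L2_set (\<lambda>k. c * f k) K = L2_set (\<lambda>k. \<bar>c\<bar> * f k) K"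
    unfolding L2_set_def by (simp add: power_mult_distrib)
  also have "\<dots> = \<bar>c\<bar> * L2_set f K" by (simp add: L2_set_right_distrib)
  finally show ?thesis .
qed

lemma L2_set_minus: "L2_set (\<lambda>k. - f k) K = L2_set f K"
  unfolding L2_set_def by simp

lemma L2_set_diff_le: "L2_set (\<lambda>k. f k - g k) K \<le> L2_set f K + L2_set g K"
proof -
  have "L2_set (\<lambda>k. f k + - g k) K \<le> L2_set f K + L2_set (\<lambda>k. - g k) K"
    by (rule L2_set_triangle_ineq)
  then show ?thesis by (simp add: L2_set_minus)
qed

lemma L2_set_ge_diff: "L2_set f K - L2_set g K \<le> L2_set (\<lambda>k. f k + g k) K"
proof -
  have "L2_set (\<lambda>k. (f k + g k) - g k) K \<le> L2_set (\<lambda>k. f k + g k) K + L2_set g K"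
    by (rule L2_set_diff_le)
  then show ?thesis by simp
qed

lemma sum_mult_le_L2: "(\<Sum>k\<in>K. f k * g k) \<le> L2_set f K * L2_set g K"
proof -
  have "(\<Sum>k\<in>K. f k * g k) \<le> (\<Sum>k\<in>K. \<bar>f k\<bar> * \<bar>g k\<bar>)"
    by (intro sum_mono) (simp add: abs_mult[symmetric])
  also have "\<dots> \<le> L2_set f K * L2_set g K" by (rule L2_set_mult_ineq)
  finally show ?thesis .
qed

lemma L2_set_sq: "finite K \<Longrightarrow> (L2_set f K)\<^sup>2 = (\<Sum>k\<in>K. (f k)\<^sup>2)"
  unfolding L2_set_def by (simp add: sum_nonneg)

lemma L2_set_zero_eq: "finite K \<Longrightarrow> L2_set f K = 0 \<Longrightarrow> k \<in> K \<Longrightarrow> f k = 0"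
  using L2_set_eq_0_iff by blast

definition xt :: "nat \<Rightarrow> (nat \<Rightarrow> nat \<Rightarrow> real) \<Rightarrow> (nat \<Rightarrow> nat \<Rightarrow> real) \<Rightarrow> nat \<Rightarrow> nat \<Rightarrow> real" where
  "xt n X R j k = (\<Sum>i<n. X i j * R i k)"

lemma gram_mult:
  assumes "n \<ge> 1"
  shows "real n * (\<Sum>j'<p. gram n X j j' * D j' k) = xt n X (matmul p X D) j k"
proof -
  have "real n * (\<Sum>j'<p. gram n X j j' * D j' k) = (\<Sum>j'<p. \<Sum>i<n. X i j * X i j' * D j' k)"
    using assms unfolding gram_def by (simp add: sum_distrib_left sum_distrib_right)
  also have "\<dots> = (\<Sum>i<n. \<Sum>j'<p. X i j * X i j' * D j' k)" by (rule sum.swap)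
  also have "\<dots> = xt n X (matmul p X D) j k"
    unfolding xt_def matmul_def by (simp add: sum_distrib_left mult.assoc)
  finally show ?thesis .
qed

lemma resid_eq:
  "msub (obs p X Bs E) (matmul p X Bh) i k = E (i, k) - matmul p X (msub Bh Bs) i k"
  unfolding msub_def obs_def matmul_def by (simp add: sum_subtractf algebra_simps)

lemma xt_resid:
  "xt n X (matmul p X (msub Bh Bs)) j k
     = xt n X (\<lambda>i k. E (i, k)) j k - xt n X (msub (obs p X Bs E) (matmul p X Bh)) j k"
  unfolding xt_def resid_eq by (simp add: sum_subtractf algebra_simps)

lemma row_bound:
  assumes "j < p" "gram n X j j = 1" "\<forall>j'<p. j' \<noteq> j \<longrightarrow> \<bar>gram n X j j'\<bar> \<le> \<mu>" "\<mu> \<ge> 0"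
  shows "row_norm q D j \<le> L2_set (\<lambda>k. \<Sum>j'<p. gram n X j j' * D j' k) {..<q} + \<mu> * norm21 p q D"
proof -
  let ?J = "{..<p} - {j}"
  have split: "(\<Sum>j'<p. gram n X j j' * D j' k) = D j k + (\<Sum>j'\<in>?J. gram n X j j' * D j' k)" for k
    using assms(1,2) by (simp add: sum.remove[of "{..<p}" j])
  have "row_norm q D j = L2_set (\<lambda>k. (\<Sum>j'<p. gram n X j j' * D j' k) - (\<Sum>j'\<in>?J. gram n X j j' * D j' k)) {..<q}"
    unfolding row_norm_L2 split by simp
  also have "\<dots> \<le> L2_set (\<lambda>k. \<Sum>j'<p. gram n X j j' * D j' k) {..<q} + L2_set (\<lambda>k. \<Sum>j'\<in>?J. gram n X j j' * D j' k) {..<q}"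
    by (rule L2_set_diff_le)
  also have "L2_set (\<lambda>k. \<Sum>j'\<in>?J. gram n X j j' * D j' k) {..<q} \<le> (\<Sum>j'\<in>?J. L2_set (\<lambda>k. gram n X j j' * D j' k) {..<q})"
    by (rule L2_set_sum_le) simp
  also have "\<dots> = (\<Sum>j'\<in>?J. \<bar>gram n X j j'\<bar> * row_norm q D j')"
    by (simp add: L2_set_scale row_norm_L2)
  also have "\<dots> \<le> (\<Sum>j'\<in>?J. \<mu> * row_norm q D j')"
    using assms(3) by (intro sum_mono mult_right_mono) (auto simp: row_norm_def sum_nonneg)
  also have "\<dots> \<le> (\<Sum>j'<p. \<mu> * row_norm q D j')"
    using assms(4) by (intro sum_mono2) (auto simp: row_norm_def sum_nonneg)
  also have "\<dots> = \<mu> * norm21 p q D" unfolding norm21_def by (simp add: sum_distrib_left)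
  finally show ?thesis by simp
qed

lemma realA:
  fixes a W c m :: real
  assumes a: "a \<ge> 0" and W: "W \<ge> 0" and c: "c > 0" and m: "m > 0"
    and nonneg: "\<And>t. t > 0 \<Longrightarrow> a\<^sup>2 - 2 * t * W\<^sup>2 + t\<^sup>2 * m * W\<^sup>2 \<ge> 0"
    and opt: "\<And>t. t > 0 \<Longrightarrow> sqrt (a\<^sup>2 - 2 * t * W\<^sup>2 + t\<^sup>2 * m * W\<^sup>2) \<ge> a - t * c * W"
  shows "W \<le> c * a"
proof (rule ccontr)
  assume "\<not> W \<le> c * a"
  then have Wgt: "W > c * a" by simp
  then have Wp: "W > 0" using a c by (meson mult_nonneg_nonneg not_le order.strict_trans2 order_less_le)
  show False
  proof (cases "a = 0")
    case True
    have "(1/m)\<^sup>2 * m * W\<^sup>2 - 2 * (1/m) * W\<^sup>2 \<ge> 0" using nonneg[of "1/m"] m True by simp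
    moreover have "(1/m)\<^sup>2 * m * W\<^sup>2 - 2 * (1/m) * W\<^sup>2 = - (W\<^sup>2 / m)"
      using m by (simp add: power2_eq_square field_simps)
    moreover have "W\<^sup>2 / m > 0" using Wp m by simp
    ultimately show False by linarith
  next
    case False
    then have ap: "a > 0" using a by simp
    define t where "t = min (a / (c * W + 1)) ((W - c * a) / (m * W))"
    have t1: "t > 0" unfolding t_def using ap c Wp m Wgt by (simp add: add_pos_nonneg)
    have t2: "t * (c * W) < a"
    proof -
      have "t \<le> a / (c * W + 1)" unfolding t_def by simp
      then have "t * (c * W) \<le> a / (c * W + 1) * (c * W)" using c Wp by (intro mult_right_mono) auto
      also have "\<dots> = a * (c * W) / (c * W + 1)" by simp
      also have "\<dots> < a"
      proof -
        have d: "c * W + 1 > 0" using c Wp by (simp add: add_pos_nonneg)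
        have "a * (c * W) < a * (c * W + 1)" using ap by (simp add: algebra_simps)
        then show ?thesis using pos_divide_less_eq[OF d] by simp
      qed
      finally show ?thesis .
    qed
    have t3: "t * (m * W) \<le> W - c * a"
    proof -
      have "t \<le> (W - c * a) / (m * W)" unfolding t_def by simp
      then show ?thesis using m Wp by (simp add: field_simps)
    qed
    have pos: "a - t * c * W > 0" using t2 by (simp add: mult.assoc)
    have "(a - t * c * W)\<^sup>2 \<le> (sqrt (a\<^sup>2 - 2 * t * W\<^sup>2 + t\<^sup>2 * m * W\<^sup>2))\<^sup>2"
      using opt[OF t1] pos by (intro power_mono) auto
    also have "\<dots> = a\<^sup>2 - 2 * t * W\<^sup>2 + t\<^sup>2 * m * W\<^sup>2" using nonneg[OF t1] by simp
    finally have ineq: "(a - t * c * W)\<^sup>2 \<le> a\<^sup>2 - 2 * t * W\<^sup>2 + t\<^sup>2 * m * W\<^sup>2" .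
    have e1: "(a - t * c * W)\<^sup>2 = a\<^sup>2 - 2 * t * (c * a * W) + (t * c * W)\<^sup>2"
      by (simp add: power2_eq_square algebra_simps)
    have e2: "(t * c * W)\<^sup>2 \<ge> 0" by simp
    have e3: "2 * t * W\<^sup>2 - 2 * t * (c * a * W) \<le> t\<^sup>2 * m * W\<^sup>2" using ineq e1 e2 by linarith
    have "t * (2 * W * (W - c * a)) = 2 * t * W\<^sup>2 - 2 * t * (c * a * W)"
      by (simp add: power2_eq_square algebra_simps)
    moreover have "t * (t * (m * W) * W) = t\<^sup>2 * m * W\<^sup>2"
      by (simp add: power2_eq_square algebra_simps)
    ultimately have "t * (2 * W * (W - c * a)) \<le> t * (t * (m * W) * W)" using e3 by argo
    then have "2 * W * (W - c * a) \<le> t * (m * W) * W" using t1 by simp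
    also have "\<dots> \<le> (W - c * a) * W" using t3 Wp by (intro mult_right_mono) auto
    finally have "2 * W * (W - c * a) \<le> (W - c * a) * W" .
    moreover have "(W - c * a) * W > 0" using Wp Wgt by simp
    ultimately show False by (simp add: algebra_simps)
  qed
qed

lemma realB:
  fixes W K \<sigma> lam m :: real
  assumes W: "W \<ge> 0" and K: "K > 0" and s: "\<sigma> > 0" and lam: "lam \<ge> 0" and m: "m > 0"
    and opt: "\<And>t. t > 0 \<Longrightarrow> (- 2 * t * W\<^sup>2 + t\<^sup>2 * m * W\<^sup>2) / (2 * K * \<sigma>) + lam * t * W \<ge> 0"
  shows "W \<le> lam * K * \<sigma>"
proof (rule ccontr)
  assume "\<not> W \<le> lam * K * \<sigma>"
  then have Wgt: "W > lam * K * \<sigma>" by simp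
  then have Wp: "W > 0" using lam K s by (smt (verit) mult_nonneg_nonneg)
  define t where "t = (W - lam * K * \<sigma>) / (m * W)"
  have t1: "t > 0" unfolding t_def using Wgt Wp m by simp
  have tm: "t * m * W = W - lam * K * \<sigma>" unfolding t_def using Wp m by (simp add: field_simps)
  have "0 \<le> (- 2 * t * W\<^sup>2 + t\<^sup>2 * m * W\<^sup>2) / (2 * K * \<sigma>) + lam * t * W" by (rule opt[OF t1])
  also have "\<dots> = t * W * ((t * m * W - 2 * W) / (2 * K * \<sigma>) + lam)"
    using K s by (simp add: power2_eq_square field_simps)
  also have "(t * m * W - 2 * W) / (2 * K * \<sigma>) + lam = (lam * K * \<sigma> - W) / (2 * K * \<sigma>)"
    unfolding tm using K s by (simp add: field_simps)
  finally have "0 \<le> t * W * ((lam * K * \<sigma> - W) / (2 * K * \<sigma>))" .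
  moreover have "(lam * K * \<sigma> - W) / (2 * K * \<sigma>) < 0" using Wgt K s by (simp add: divide_neg_pos)
  moreover have "t * W > 0" using t1 Wp by simp
  ultimately show False using mult_pos_neg[of "t * W" "(lam * K * \<sigma> - W) / (2 * K * \<sigma>)"] by linarith
qed

definition pert :: "(nat \<Rightarrow> nat \<Rightarrow> real) \<Rightarrow> nat \<Rightarrow> real \<Rightarrow> (nat \<Rightarrow> real) \<Rightarrow> nat \<Rightarrow> nat \<Rightarrow> real" where
  "pert B j t w = (\<lambda>j' k. B j' k + (if j' = j then t * w k else 0))"

lemma pert_matmul:
  assumes "j < p"
  shows "matmul p X (pert B j t w) i k = matmul p X B i k + t * X i j * w k"
proof -
  have "(\<Sum>j'<p. X i j' * (if j' = j then t * w k else 0)) = (\<Sum>j'<p. if j' = j then X i j * (t * w k) else 0)"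
    by (intro sum.cong) auto
  also have "\<dots> = X i j * (t * w k)" using assms by simp
  finally show ?thesis unfolding matmul_def pert_def by (simp add: distrib_left sum.distrib)
qed

lemma pert_res:
  assumes "j < p"
  shows "msub Y (matmul p X (pert B j t w)) i k = msub Y (matmul p X B) i k - t * X i j * w k"
  unfolding msub_def pert_matmul[OF assms] by simp

lemma fro_sq: "(fro n q M)\<^sup>2 = (\<Sum>i<n. \<Sum>k<q. (M i k)\<^sup>2)"
  unfolding fro_def by (simp add: sum_nonneg)

lemma pert_fro_sq:
  fixes Y B X :: "nat \<Rightarrow> nat \<Rightarrow> real" and n p q j :: nat and t :: real
  assumes "j < p" "(\<Sum>i<n. (X i j)\<^sup>2) = real n"
  defines "R \<equiv> msub Y (matmul p X B)"
  defines "w \<equiv> xt n X R j"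
  shows "(fro n q (msub Y (matmul p X (pert B j t w))))\<^sup>2
         = (fro n q R)\<^sup>2 - 2 * t * (\<Sum>k<q. (w k)\<^sup>2) + t\<^sup>2 * real n * (\<Sum>k<q. (w k)\<^sup>2)"
proof -
  have e: "(R i k - t * X i j * w k)\<^sup>2 = (R i k)\<^sup>2 - 2 * t * (X i j * R i k * w k) + t\<^sup>2 * ((X i j)\<^sup>2 * (w k)\<^sup>2)" for i k
    by (simp add: power2_eq_square algebra_simps)
  have "(fro n q (msub Y (matmul p X (pert B j t w))))\<^sup>2 = (\<Sum>i<n. \<Sum>k<q. (R i k - t * X i j * w k)\<^sup>2)"
    unfolding fro_sq pert_res[OF assms(1)] R_def by simp
  also have "\<dots> = (\<Sum>i<n. \<Sum>k<q. (R i k)\<^sup>2) - 2 * t * (\<Sum>i<n. \<Sum>k<q. X i j * R i k * w k)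
                  + t\<^sup>2 * (\<Sum>i<n. \<Sum>k<q. (X i j)\<^sup>2 * (w k)\<^sup>2)"
    unfolding e by (simp add: sum.distrib sum_subtractf sum_distrib_left)
  also have "(\<Sum>i<n. \<Sum>k<q. X i j * R i k * w k) = (\<Sum>k<q. (w k)\<^sup>2)"
  proof -
    have "(\<Sum>i<n. \<Sum>k<q. X i j * R i k * w k) = (\<Sum>k<q. \<Sum>i<n. X i j * R i k * w k)" by (rule sum.swap)
    also have "\<dots> = (\<Sum>k<q. w k * w k)"
      unfolding w_def xt_def by (simp add: sum_distrib_right mult.commute)
    finally show ?thesis by (simp add: power2_eq_square)
  qed
  also have "(\<Sum>i<n. \<Sum>k<q. (X i j)\<^sup>2 * (w k)\<^sup>2) = real n * (\<Sum>k<q. (w k)\<^sup>2)"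
    using assms(2) by (simp add: sum_distrib_left[symmetric] sum_distrib_right[symmetric])
  finally show ?thesis unfolding fro_sq by (simp add: mult.assoc)
qed

lemma pert_norm21:
  assumes "j < p" "t \<ge> 0"
  shows "norm21 p q (pert B j t w) \<le> norm21 p q B + t * L2_set w {..<q}"
proof -
  have "row_norm q (pert B j t w) j' \<le> row_norm q B j' + (if j' = j then t * L2_set w {..<q} else 0)" for j'
  proof (cases "j' = j")
    case True
    have "row_norm q (pert B j t w) j' = L2_set (\<lambda>k. B j k + t * w k) {..<q}"
      unfolding row_norm_L2 pert_def True by simp
    also have "\<dots> \<le> L2_set (B j) {..<q} + L2_set (\<lambda>k. t * w k) {..<q}" by (rule L2_set_triangle_ineq)
    also have "L2_set (\<lambda>k. t * w k) {..<q} = t * L2_set w {..<q}" using assms(2) by (simp add: L2_set_scale)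
    finally show ?thesis using True by (simp add: row_norm_L2)
  next
    case False
    then show ?thesis unfolding row_norm_L2 pert_def by simp
  qed
  then have "norm21 p q (pert B j t w) \<le> (\<Sum>j'<p. row_norm q B j' + (if j' = j then t * L2_set w {..<q} else 0))"
    unfolding norm21_def by (intro sum_mono) auto
  also have "\<dots> = norm21 p q B + t * L2_set w {..<q}"
    using assms(1) unfolding norm21_def by (simp add: sum.distrib)
  finally show ?thesis .
qed

lemma L2_sq_lessThan: "(L2_set w {..<(q::nat)})\<^sup>2 = (\<Sum>k<q. (w k)\<^sup>2)"
  using L2_set_sq[of "{..<q}" w] by simp

lemma opt_a:
  fixes Y Bh X :: "nat \<Rightarrow> nat \<Rightarrow> real"
  assumes n: "n \<ge> 1" and q: "q \<ge> 1" and lam: "lam > 0" and j: "j < p"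
    and xn: "(\<Sum>i<n. (X i j)\<^sup>2) = real n"
    and min: "\<forall>B. sqrt_lasso_obj n p q X Y lam Bh \<le> sqrt_lasso_obj n p q X Y lam B"
  shows "L2_set (xt n X (msub Y (matmul p X Bh)) j) {..<q} \<le> lam * sqrt (real n * real q) * fro n q (msub Y (matmul p X Bh))"
proof -
  define R where "R = msub Y (matmul p X Bh)"
  define w where "w = xt n X R j"
  define W where "W = L2_set w {..<q}"
  define a where "a = fro n q R"
  define N where "N = sqrt (real n * real q)"
  have Np: "N > 0" unfolding N_def using n q by simp
  have W2: "(\<Sum>k<q. (w k)\<^sup>2) = W\<^sup>2" unfolding W_def by (simp add: L2_sq_lessThan)
  have frot: "(fro n q (msub Y (matmul p X (pert Bh j t w))))\<^sup>2 = a\<^sup>2 - 2 * t * W\<^sup>2 + t\<^sup>2 * real n * W\<^sup>2" for t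
    using pert_fro_sq[where Y=Y and B=Bh and X=X and n=n and p=p and q=q and j=j and t=t, OF j xn] unfolding a_def R_def w_def W2[unfolded w_def R_def] W2 by simp
  show ?thesis
    unfolding R_def[symmetric] w_def[symmetric] W_def[symmetric] a_def[symmetric] N_def[symmetric]
  proof (rule realA)
    show "a \<ge> 0" unfolding a_def fro_def by (simp add: sum_nonneg)
    show "W \<ge> 0" unfolding W_def by simp
    show "lam * N > 0" using lam Np by simp
    show "real n > 0" using n by simp
    fix t :: real assume t: "t > 0"
    show "a\<^sup>2 - 2 * t * W\<^sup>2 + t\<^sup>2 * real n * W\<^sup>2 \<ge> 0" unfolding frot[symmetric] by simp
    have "sqrt_lasso_obj n p q X Y lam Bh \<le> sqrt_lasso_obj n p q X Y lam (pert Bh j t w)" using min by blast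
    also have "\<dots> \<le> fro n q (msub Y (matmul p X (pert Bh j t w))) / N + lam * (norm21 p q Bh + t * W)"
      unfolding sqrt_lasso_obj_def N_def[symmetric] W_def
      using pert_norm21[where B=Bh and q=q and w=w and t=t, OF j] t lam by (intro add_left_mono mult_left_mono) auto
    finally have "a / N + lam * norm21 p q Bh \<le> fro n q (msub Y (matmul p X (pert Bh j t w))) / N + lam * (norm21 p q Bh + t * W)"
      unfolding sqrt_lasso_obj_def N_def[symmetric] a_def R_def .
    then have "a / N \<le> fro n q (msub Y (matmul p X (pert Bh j t w))) / N + lam * t * W"
      by (simp add: algebra_simps)
    then have "a \<le> fro n q (msub Y (matmul p X (pert Bh j t w))) + lam * N * t * W"
      using Np by (simp add: field_simps)
    moreover have "fro n q (msub Y (matmul p X (pert Bh j t w))) = sqrt (a\<^sup>2 - 2 * t * W\<^sup>2 + t\<^sup>2 * real n * W\<^sup>2)"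
      unfolding frot[symmetric] by (simp add: fro_def sum_nonneg)
    ultimately show "sqrt (a\<^sup>2 - 2 * t * W\<^sup>2 + t\<^sup>2 * real n * W\<^sup>2) \<ge> a - t * (lam * N) * W"
      by (simp add: algebra_simps)
  qed
qed

lemma opt_b:
  fixes Y Bh X :: "nat \<Rightarrow> nat \<Rightarrow> real"
  assumes n: "n \<ge> 1" and q: "q \<ge> 1" and lam: "lam > 0" and j: "j < p"
    and xn: "(\<Sum>i<n. (X i j)\<^sup>2) = real n" and sh: "\<sigma>h > 0"
    and min: "\<forall>B. smooth_obj n p q X Y lam Bh \<sigma>h \<le> smooth_obj n p q X Y lam B \<sigma>h"
  shows "L2_set (xt n X (msub Y (matmul p X Bh)) j) {..<q} \<le> lam * (real n * real q) * \<sigma>h"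
proof -
  define R where "R = msub Y (matmul p X Bh)"
  define w where "w = xt n X R j"
  define W where "W = L2_set w {..<q}"
  define a where "a = fro n q R"
  define K where "K = real n * real q"
  have Kp: "K > 0" unfolding K_def using n q by simp
  have W2: "(\<Sum>k<q. (w k)\<^sup>2) = W\<^sup>2" unfolding W_def by (simp add: L2_sq_lessThan)
  have frot: "(fro n q (msub Y (matmul p X (pert Bh j t w))))\<^sup>2 = a\<^sup>2 - 2 * t * W\<^sup>2 + t\<^sup>2 * real n * W\<^sup>2" for t
    using pert_fro_sq[where Y=Y and B=Bh and X=X and n=n and p=p and q=q and j=j and t=t, OF j xn] unfolding a_def R_def w_def W2[unfolded w_def R_def] W2 by simp
  show ?thesis
    unfolding R_def[symmetric] w_def[symmetric] W_def[symmetric] K_def[symmetric]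
  proof (rule realB)
    show "W \<ge> 0" unfolding W_def by simp
    show "K > 0" by (rule Kp)
    show "\<sigma>h > 0" by (rule sh)
    show "lam \<ge> 0" using lam by simp
    show "real n > 0" using n by simp
    fix t :: real assume t: "t > 0"
    have "smooth_obj n p q X Y lam Bh \<sigma>h \<le> smooth_obj n p q X Y lam (pert Bh j t w) \<sigma>h" using min by blast
    also have "\<dots> \<le> (fro n q (msub Y (matmul p X (pert Bh j t w))))\<^sup>2 / (2 * K * \<sigma>h) + \<sigma>h / 2 + lam * (norm21 p q Bh + t * W)"
      unfolding smooth_obj_def W_def K_def
      using pert_norm21[where B=Bh and q=q and w=w and t=t, OF j] t lam by (simp add: mult.assoc)
    finally have "a\<^sup>2 / (2 * K * \<sigma>h) + \<sigma>h / 2 + lam * norm21 p q Bh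
        \<le> (a\<^sup>2 - 2 * t * W\<^sup>2 + t\<^sup>2 * real n * W\<^sup>2) / (2 * K * \<sigma>h) + \<sigma>h / 2 + lam * (norm21 p q Bh + t * W)"
      unfolding smooth_obj_def K_def a_def R_def frot[unfolded a_def R_def] by (simp add: mult.assoc)
    then have "0 \<le> (a\<^sup>2 - 2 * t * W\<^sup>2 + t\<^sup>2 * real n * W\<^sup>2) / (2 * K * \<sigma>h) - a\<^sup>2 / (2 * K * \<sigma>h) + lam * t * W"
      by (simp add: algebra_simps)
    also have "(a\<^sup>2 - 2 * t * W\<^sup>2 + t\<^sup>2 * real n * W\<^sup>2) / (2 * K * \<sigma>h) - a\<^sup>2 / (2 * K * \<sigma>h)
        = (- 2 * t * W\<^sup>2 + t\<^sup>2 * real n * W\<^sup>2) / (2 * K * \<sigma>h)"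
      by (simp add: diff_divide_distrib[symmetric])
    finally show "(- 2 * t * W\<^sup>2 + t\<^sup>2 * real n * W\<^sup>2) / (2 * K * \<sigma>h) + lam * t * W \<ge> 0" .
  qed
qed

lemma obj_at_Bs:
  "msub (obs p X Bs E) (matmul p X Bs) = (\<lambda>i k. E (i, k))"
  unfolding msub_def obs_def matmul_def by simp

lemma inner_identity:
  "(\<Sum>i<n. \<Sum>k<q. msub (obs p X Bs E) (matmul p X Bh) i k * E (i, k))
     = (\<Sum>i<n. \<Sum>k<q. (E (i, k))\<^sup>2) - (\<Sum>j<p. \<Sum>k<q. msub Bh Bs j k * xt n X (\<lambda>i k. E (i, k)) j k)"
proof -
  have a: "(\<Sum>i<n. \<Sum>k<q. matmul p X (msub Bh Bs) i k * E (i, k))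
        = (\<Sum>j<p. \<Sum>k<q. msub Bh Bs j k * xt n X (\<lambda>i k. E (i, k)) j k)"
  proof -
    have "(\<Sum>i<n. \<Sum>k<q. matmul p X (msub Bh Bs) i k * E (i, k))
        = (\<Sum>i<n. \<Sum>k<q. \<Sum>j<p. X i j * msub Bh Bs j k * E (i, k))"
      unfolding matmul_def by (simp add: sum_distrib_right)
    also have "\<dots> = (\<Sum>k<q. \<Sum>i<n. \<Sum>j<p. X i j * msub Bh Bs j k * E (i, k))" by (rule sum.swap)
    also have "\<dots> = (\<Sum>k<q. \<Sum>j<p. \<Sum>i<n. X i j * msub Bh Bs j k * E (i, k))"
      by (intro sum.cong refl sum.swap)
    also have "\<dots> = (\<Sum>j<p. \<Sum>k<q. \<Sum>i<n. X i j * msub Bh Bs j k * E (i, k))" by (rule sum.swap)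
    also have "\<dots> = (\<Sum>j<p. \<Sum>k<q. msub Bh Bs j k * xt n X (\<lambda>i k. E (i, k)) j k)"
      unfolding xt_def by (simp add: sum_distrib_left algebra_simps)
    finally show ?thesis .
  qed
  show ?thesis
    unfolding resid_eq a[symmetric]
    by (simp add: left_diff_distrib sum_subtractf power2_eq_square)
qed

lemma cross_bound:
  assumes "\<forall>j<p. L2_set (xt n X (\<lambda>i k. E (i, k)) j) {..<q} \<le> G"
  shows "(\<Sum>j<p. \<Sum>k<q. D j k * xt n X (\<lambda>i k. E (i, k)) j k) \<le> G * norm21 p q D"
proof -
  have "(\<Sum>j<p. \<Sum>k<q. D j k * xt n X (\<lambda>i k. E (i, k)) j k)
      \<le> (\<Sum>j<p. row_norm q D j * L2_set (xt n X (\<lambda>i k. E (i, k)) j) {..<q})"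
    unfolding row_norm_L2 by (intro sum_mono sum_mult_le_L2)
  also have "\<dots> \<le> (\<Sum>j<p. row_norm q D j * G)"
    using assms by (intro sum_mono mult_left_mono) (auto simp: row_norm_def sum_nonneg)
  also have "\<dots> = G * norm21 p q D" unfolding norm21_def by (simp add: sum_distrib_left mult.commute)
  finally show ?thesis .
qed

lemma inner_le_fro:
  "(\<Sum>i<n. \<Sum>k<q. A i k * B i k) \<le> fro n q A * fro n q B"
proof -
  have "(\<Sum>i<n. \<Sum>k<q. A i k * B i k) = (\<Sum>ik\<in>{..<n}\<times>{..<q}. (\<lambda>(i,k). A i k) ik * (\<lambda>(i,k). B i k) ik)"
    by (simp add: sum.cartesian_product case_prod_beta)
  also have "\<dots> \<le> L2_set (\<lambda>(i,k). A i k) ({..<n}\<times>{..<q}) * L2_set (\<lambda>(i,k). B i k) ({..<n}\<times>{..<q})"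
    by (rule sum_mult_le_L2)
  finally show ?thesis by (simp add: fro_L2)
qed

lemma norm21_nonneg: "norm21 p q D \<ge> 0"
  unfolding norm21_def row_norm_def by (simp add: sum_nonneg)

lemma row_norm_nonneg: "row_norm q D j \<ge> 0"
  unfolding row_norm_def by (simp add: sum_nonneg)

lemma fro_nonneg: "fro n q D \<ge> 0"
  unfolding fro_def by (simp add: sum_nonneg)

lemma row_norm_zero: "row_norm q M j = 0 \<Longrightarrow> k < q \<Longrightarrow> M j k = 0"
  unfolding row_norm_L2 using L2_set_zero_eq[of "{..<q}" "M j" k] by simp

lemma row_decomp:
  assumes "j < p"
  shows "row_norm q Bh j \<ge> row_norm q Bs j + (if row_norm q Bs j \<noteq> 0 then - row_norm q (msub Bh Bs) j else row_norm q (msub Bh Bs) j)"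
proof (cases "row_norm q Bs j \<noteq> 0")
  case True
  have "L2_set (Bs j) {..<q} - L2_set (msub Bh Bs j) {..<q} \<le> L2_set (\<lambda>k. Bs j k + msub Bh Bs j k) {..<q}"
    by (rule L2_set_ge_diff)
  then show ?thesis using True by (simp add: row_norm_L2 msub_def)
next
  case False
  then have "row_norm q (msub Bh Bs) j = row_norm q Bh j"
    unfolding row_norm_def msub_def using row_norm_zero[of q Bs j] False by (intro arg_cong[where f=sqrt] sum.cong) auto
  then show ?thesis using False by simp
qed

lemma fro_E_sq: "(fro n q (\<lambda>i k. E (i, k)))\<^sup>2 = (\<Sum>i<n. \<Sum>k<q. (E (i, k))\<^sup>2)"
  by (simp add: fro_sq)

lemma cone:
  fixes E :: "nat \<times> nat \<Rightarrow> real"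
  assumes n: "n \<ge> 1" and q: "q \<ge> 1" and lam: "lam > 0" and sig: "\<sigma> > 0"
    and H1: "\<forall>j<p. L2_set (xt n X (\<lambda>i k. E (i, k)) j) {..<q} \<le> lam * (real n * real q) * \<sigma> / (2 * sqrt 2)"
    and H2: "real n * real q * \<sigma>\<^sup>2 / 2 \<le> (fro n q (\<lambda>i k. E (i, k)))\<^sup>2"
    and Hc: "sqrt_lasso_obj n p q X (obs p X Bs E) lam Bh \<le> sqrt_lasso_obj n p q X (obs p X Bs E) lam Bs"
  shows "norm21 p q Bh \<le> norm21 p q Bs + norm21 p q (msub Bh Bs) / 2"
proof -
  define N where "N = sqrt (real n * real q)"
  define e where "e = fro n q (\<lambda>i k. E (i, k))"
  define \<rho> where "\<rho> = fro n q (msub (obs p X Bs E) (matmul p X Bh))"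
  define d where "d = norm21 p q (msub Bh Bs)"
  define G where "G = lam * (real n * real q) * \<sigma> / (2 * sqrt 2)"
  have Np: "N > 0" unfolding N_def using n q by simp
  have N2: "N\<^sup>2 = real n * real q" unfolding N_def by simp
  have d0: "d \<ge> 0" unfolding d_def by (rule norm21_nonneg)
  have e0: "e \<ge> 0" unfolding e_def by (rule fro_nonneg)
  have eN: "e \<ge> N * \<sigma> / sqrt 2"
  proof -
    have "(N * \<sigma> / sqrt 2)\<^sup>2 = real n * real q * \<sigma>\<^sup>2 / 2"
      by (simp add: power_mult_distrib power_divide N2)
    also have "\<dots> \<le> e\<^sup>2" using H2 unfolding e_def .
    finally show ?thesis using e0 by (rule power2_le_imp_le)
  qed
  have "N * \<sigma> / sqrt 2 > 0" using Np sig by simp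
  then have ep: "e > 0" using eN by linarith
  have Ge: "G \<le> lam * N * e / 2"
  proof -
    have "G = lam * N * (N * \<sigma> / sqrt 2) / 2"
      unfolding G_def N2[symmetric] by (simp add: power2_eq_square)
    also have "\<dots> \<le> lam * N * e / 2" using eN lam Np by (intro divide_right_mono mult_left_mono) auto
    finally show ?thesis .
  qed
  have inner: "\<rho> * e \<ge> e\<^sup>2 - G * d"
  proof -
    have "e\<^sup>2 - G * d \<le> (\<Sum>i<n. \<Sum>k<q. (E (i, k))\<^sup>2) - (\<Sum>j<p. \<Sum>k<q. msub Bh Bs j k * xt n X (\<lambda>i k. E (i, k)) j k)"
      using cross_bound[OF H1, of "msub Bh Bs"] unfolding e_def fro_E_sq d_def G_def by simp
    also have "\<dots> = (\<Sum>i<n. \<Sum>k<q. msub (obs p X Bs E) (matmul p X Bh) i k * E (i, k))"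
      by (rule inner_identity[symmetric])
    also have "\<dots> \<le> \<rho> * e" unfolding \<rho>_def e_def by (rule inner_le_fro)
    finally show ?thesis .
  qed
  have rho: "\<rho> \<ge> e - lam * N * d / 2"
  proof -
    have "G * d \<le> lam * N * e / 2 * d" using Ge d0 by (rule mult_right_mono)
    moreover have "e * (e - lam * N * d / 2) = e\<^sup>2 - lam * N * e / 2 * d"
      by (simp add: power2_eq_square algebra_simps)
    ultimately have "e * (e - lam * N * d / 2) \<le> e * \<rho>" using inner by (simp add: mult.commute)
    then show ?thesis using ep by simp
  qed
  have "\<rho> / N + lam * norm21 p q Bh \<le> e / N + lam * norm21 p q Bs"
    using Hc unfolding sqrt_lasso_obj_def obj_at_Bs \<rho>_def e_def N_def .
  then have "lam * norm21 p q Bh \<le> lam * norm21 p q Bs + (e - \<rho>) / N"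
    by (simp add: diff_divide_distrib)
  also have "(e - \<rho>) / N \<le> (lam * N * d / 2) / N" using rho Np by (intro divide_right_mono) auto
  also have "(lam * N * d / 2) / N = lam * (d / 2)" using Np by simp
  finally have "lam * norm21 p q Bh \<le> lam * (norm21 p q Bs + d / 2)" by (simp add: algebra_simps)
  then show ?thesis using lam unfolding d_def by simp
qed

lemma row_le_norm2inf: "j < p \<Longrightarrow> row_norm q D j \<le> norm2inf p q D"
  unfolding norm2inf_def by (rule Max_ge) auto

lemma norm2inf_le:
  assumes "p \<ge> 1" "\<forall>j<p. row_norm q D j \<le> b"
  shows "norm2inf p q D \<le> b"
proof -
  have "0 \<in> {..<p}" using assms(1) by simp
  then have ne: "(\<lambda>j. row_norm q D j) ` {..<p} \<noteq> {}" by blast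
  show ?thesis unfolding norm2inf_def using ne assms(2) by (subst Max_le_iff) auto
qed

lemma sup_from_recursion:
  fixes M T \<alpha> C :: real
  assumes a: "\<alpha> > 1" and T: "T \<ge> 0" and rec: "M \<le> T + 4 / (7 * \<alpha>) * M"
    and C: "C = 1 + 16 / (7 * (\<alpha> - 1))"
  shows "M \<le> C * T"
proof -
  have a7: "7 * \<alpha> > 0" using a by simp
  have "7 * \<alpha> * M \<le> 7 * \<alpha> * T + 4 * M"
  proof -
    have "7 * \<alpha> * M \<le> 7 * \<alpha> * (T + 4 / (7 * \<alpha>) * M)" using rec a7 by (intro mult_left_mono) auto
    also have "\<dots> = 7 * \<alpha> * T + 4 * M" using a7 by (simp add: algebra_simps)
    finally show ?thesis .
  qed
  then have m1: "M * (7 * \<alpha> - 4) \<le> 7 * \<alpha> * T" by (simp add: algebra_simps)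
  have Ceq: "C * (7 * \<alpha> - 7) = 7 * \<alpha> + 9" unfolding C using a by (simp add: field_simps)
  have "C * (7 * \<alpha> - 4) \<ge> 7 * \<alpha>"
  proof -
    have "C * (7 * \<alpha> - 4) = C * (7 * \<alpha> - 7) + 3 * C" by (simp add: algebra_simps)
    also have "\<dots> = 7 * \<alpha> + 9 + 3 * C" using Ceq by simp
    also have "\<dots> \<ge> 7 * \<alpha>" unfolding C using a by (simp add: add_nonneg_nonneg)
    finally show ?thesis .
  qed
  then have "7 * \<alpha> * T \<le> C * (7 * \<alpha> - 4) * T" using T by (intro mult_right_mono) auto
  with m1 have "M * (7 * \<alpha> - 4) \<le> (C * T) * (7 * \<alpha> - 4)" by (simp add: algebra_simps)
  moreover have "7 * \<alpha> - 4 > 0" using a by simp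
  ultimately show ?thesis by simp
qed

lemma det_core:
  fixes n p q s :: nat and X Bs Bh :: "nat \<Rightarrow> nat \<Rightarrow> real" and E :: "nat \<times> nat \<Rightarrow> real"
    and \<sigma> \<alpha> lam \<eta> C :: real
  assumes n: "n \<ge> 1" and p: "p \<ge> 1" and q: "q \<ge> 1" and sig: "\<sigma> > 0"
    and s: "s \<ge> 1" and card: "card {j. j < p \<and> row_norm q Bs j \<noteq> 0} \<le> s"
    and a: "\<alpha> > 1"
    and gdiag: "\<forall>j<p. gram n X j j = 1"
    and gcoh: "\<forall>j<p. \<forall>j'<p. j' \<noteq> j \<longrightarrow> \<bar>gram n X j j'\<bar> \<le> 1 / (7 * \<alpha> * real s)"
    and lam: "lam > 0" and eta: "\<eta> \<ge> 0"
    and C: "C = 1 + 16 / (7 * (\<alpha> - 1))"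
    and H1: "\<forall>j<p. L2_set (xt n X (\<lambda>i k. E (i, k)) j) {..<q} \<le> lam * (real n * real q) * \<sigma> / (2 * sqrt 2)"
    and H2: "real n * real q * \<sigma>\<^sup>2 / 2 \<le> (fro n q (\<lambda>i k. E (i, k)))\<^sup>2"
    and Hc: "sqrt_lasso_obj n p q X (obs p X Bs E) lam Bh \<le> sqrt_lasso_obj n p q X (obs p X Bs E) lam Bs"
    and Hrow: "\<forall>j<p. L2_set (xt n X (msub (obs p X Bs E) (matmul p X Bh)) j) {..<q} \<le> lam * (real n * real q) * (2 + \<eta>) * \<sigma>"
  shows "good_estimate p q Bs Bh (C * (3 + \<eta>) * lam * \<sigma>)"
proof -
  define D where "D = msub Bh Bs"
  define M where "M = norm2inf p q D"
  define r where "r j = row_norm q D j" for j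
  define S where "S = {j \<in> {..<p}. row_norm q Bs j \<noteq> 0}"
  define dS where "dS = (\<Sum>j\<in>S. r j)"
  define T0 where "T0 = lam * real q * \<sigma> * (3 + \<eta>)"
  define \<mu> where "\<mu> = 1 / (7 * \<alpha> * real s)"
  have S_eq: "S = {j. j < p \<and> row_norm q Bs j \<noteq> 0}" unfolding S_def by auto
  have r0: "r j \<ge> 0" for j unfolding r_def by (rule row_norm_nonneg)
  have rM: "j < p \<Longrightarrow> r j \<le> M" for j unfolding r_def M_def by (rule row_le_norm2inf)
  have M0: "M \<ge> 0" using rM[of 0] r0[of 0] p by simp
  have T00: "T0 \<ge> 0" unfolding T0_def using lam sig eta by simp
  have sp: "real s > 0" using s by simp
  have n21D: "norm21 p q D \<le> 4 * real s * M"
  proof -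
    have cone1: "norm21 p q Bh \<le> norm21 p q Bs + norm21 p q D / 2"
      unfolding D_def by (rule cone[OF n q lam sig H1 H2 Hc])
    have "norm21 p q Bh \<ge> (\<Sum>j<p. row_norm q Bs j + (if row_norm q Bs j \<noteq> 0 then - r j else r j))"
      unfolding norm21_def r_def D_def by (intro sum_mono row_decomp) auto
    also have "(\<Sum>j<p. row_norm q Bs j + (if row_norm q Bs j \<noteq> 0 then - r j else r j))
        = norm21 p q Bs + norm21 p q D - 2 * dS"
    proof -
      have "(\<Sum>j<p. row_norm q Bs j + (if row_norm q Bs j \<noteq> 0 then - r j else r j))
          = (\<Sum>j<p. row_norm q Bs j + r j - 2 * (if row_norm q Bs j \<noteq> 0 then r j else 0))"
        by (intro sum.cong) auto
      also have "\<dots> = norm21 p q Bs + norm21 p q D - 2 * (\<Sum>j<p. if row_norm q Bs j \<noteq> 0 then r j else 0)"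
        unfolding norm21_def r_def by (simp add: sum.distrib sum_subtractf sum_distrib_left)
      also have "(\<Sum>j<p. if row_norm q Bs j \<noteq> 0 then r j else 0) = dS"
        unfolding dS_def S_def by (rule sum.inter_filter[symmetric]) simp
      finally show ?thesis .
    qed
    finally have "norm21 p q D \<le> 4 * dS" using cone1 by linarith
    also have "dS \<le> real (card S) * M"
    proof -
      have "dS \<le> (\<Sum>j\<in>S. M)" unfolding dS_def using rM by (intro sum_mono) (auto simp: S_def)
      then show ?thesis by simp
    qed
    also have "real (card S) * M \<le> real s * M" using card M0 unfolding S_eq[symmetric] by (intro mult_right_mono) auto
    finally show ?thesis by simp
  qed
  have rowj: "r j \<le> T0 + \<mu> * norm21 p q D" if j: "j < p" for j
  proof -
    have xn0: "real n * L2_set (\<lambda>k. \<Sum>j'<p. gram n X j j' * D j' k) {..<q}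
        = L2_set (\<lambda>k. real n * (\<Sum>j'<p. gram n X j j' * D j' k)) {..<q}"
      by (simp add: L2_set_right_distrib)
    have xn: "real n * L2_set (\<lambda>k. \<Sum>j'<p. gram n X j j' * D j' k) {..<q}
        = L2_set (xt n X (matmul p X D) j) {..<q}"
      unfolding xn0 gram_mult[OF n] by simp
    also have "\<dots> = L2_set (\<lambda>k. xt n X (\<lambda>i k. E (i, k)) j k - xt n X (msub (obs p X Bs E) (matmul p X Bh)) j k) {..<q}"
      unfolding D_def by (rule L2_set_cong) (simp_all add: xt_resid)
    also have "\<dots> \<le> L2_set (xt n X (\<lambda>i k. E (i, k)) j) {..<q} + L2_set (xt n X (msub (obs p X Bs E) (matmul p X Bh)) j) {..<q}"
      by (rule L2_set_diff_le)
    also have "\<dots> \<le> lam * (real n * real q) * \<sigma> / (2 * sqrt 2) + lam * (real n * real q) * (2 + \<eta>) * \<sigma>"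
      using H1 Hrow j by (intro add_mono) auto
    also have "\<dots> \<le> lam * (real n * real q) * \<sigma> * 1 + lam * (real n * real q) * \<sigma> * (2 + \<eta>)"
    proof -
      have s2: "1 \<le> sqrt (2::real)" by simp
      have "1 \<le> 2 * sqrt (2::real)" using s2 by linarith
      then have "1 / (2 * sqrt 2) \<le> (1::real)" by (simp add: divide_le_eq)
      then have "lam * (real n * real q) * \<sigma> * (1 / (2 * sqrt 2)) \<le> lam * (real n * real q) * \<sigma> * 1"
        using lam sig by (intro mult_left_mono) auto
      then show ?thesis by (simp add: algebra_simps)
    qed
    also have "\<dots> = real n * T0" unfolding T0_def by (simp add: algebra_simps)
    finally have "L2_set (\<lambda>k. \<Sum>j'<p. gram n X j j' * D j' k) {..<q} \<le> T0"
      using n by simp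
    moreover have "r j \<le> L2_set (\<lambda>k. \<Sum>j'<p. gram n X j j' * D j' k) {..<q} + \<mu> * norm21 p q D"
      unfolding r_def \<mu>_def
      by (rule row_bound[OF j]) (use gdiag gcoh j a sp in auto)
    ultimately show ?thesis by simp
  qed
  have "M \<le> T0 + 4 / (7 * \<alpha>) * M"
  proof -
    have "\<mu> * norm21 p q D \<le> \<mu> * (4 * real s * M)"
      using n21D a sp unfolding \<mu>_def by (intro mult_left_mono) auto
    also have "\<mu> * (4 * real s * M) = 4 / (7 * \<alpha>) * M" unfolding \<mu>_def using sp a by (simp add: field_simps)
    finally have "\<forall>j<p. r j \<le> T0 + 4 / (7 * \<alpha>) * M" using rowj by (smt (verit))
    then show ?thesis unfolding M_def r_def by (intro norm2inf_le[OF p]) simp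
  qed
  then have MC: "M \<le> C * T0" by (rule sup_from_recursion[OF a T00 _ C])
  define t where "t = C * (3 + \<eta>) * lam * \<sigma>"
  have Tt: "C * T0 = real q * t" unfolding T0_def t_def by (simp add: algebra_simps)
  have rj: "j < p \<Longrightarrow> r j \<le> real q * t" for j using rM MC Tt by fastforce
  show ?thesis
    unfolding good_estimate_def t_def[symmetric]
  proof (intro conjI impI)
    show "norm2inf p q (msub Bh Bs) / real q \<le> t"
      using MC Tt q unfolding M_def D_def by (simp add: divide_le_eq mult.commute)
    assume sep: "\<forall>j<p. row_norm q Bs j \<noteq> 0 \<longrightarrow> row_norm q Bs j / real q > 2 * t"
    show "{j. j < p \<and> row_norm q Bh j / real q > t} = {j. j < p \<and> row_norm q Bs j \<noteq> 0}"
    proof (intro set_eqI iffI)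
      fix j assume "j \<in> {j. j < p \<and> row_norm q Bh j / real q > t}"
      then have j: "j < p" and big: "row_norm q Bh j / real q > t" by auto
      have "row_norm q Bs j \<noteq> 0"
      proof
        assume z: "row_norm q Bs j = 0"
        have "row_norm q Bh j \<le> row_norm q Bs j + r j"
        proof -
          have "L2_set (\<lambda>k. Bs j k + D j k) {..<q} \<le> L2_set (Bs j) {..<q} + L2_set (D j) {..<q}"
            by (rule L2_set_triangle_ineq)
          then show ?thesis unfolding r_def row_norm_L2 D_def msub_def by simp
        qed
        then have "row_norm q Bh j \<le> real q * t" using z rj[OF j] by simp
        moreover have "t * real q < row_norm q Bh j" using big q by (simp add: less_divide_eq)
        ultimately show False by (simp add: mult.commute)
      qed
      then show "j \<in> {j. j < p \<and> row_norm q Bs j \<noteq> 0}" using j by simp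
    next
      fix j assume "j \<in> {j. j < p \<and> row_norm q Bs j \<noteq> 0}"
      then have j: "j < p" and nz: "row_norm q Bs j \<noteq> 0" by auto
      have "row_norm q Bh j \<ge> row_norm q Bs j - r j"
        using row_decomp[where q=q and Bh=Bh and Bs=Bs, OF j] nz unfolding r_def D_def by simp
      moreover have "row_norm q Bs j > 2 * t * real q" using sep j nz q by (simp add: less_divide_eq)
      ultimately have "row_norm q Bh j > t * real q" using rj[OF j] by (simp add: algebra_simps)
      then have "row_norm q Bh j / real q > t" using q by (simp add: less_divide_eq)
      then show "j \<in> {j. j < p \<and> row_norm q Bh j / real q > t}" using j by simp
    qed
  qed
qed

lemma gram_diag_sum: "n \<ge> 1 \<Longrightarrow> gram n X j j = 1 \<Longrightarrow> (\<Sum>i<n. (X i j)\<^sup>2) = real n"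
  unfolding gram_def by (simp add: power2_eq_square field_simps)

lemma rho_bound:
  fixes E :: "nat \<times> nat \<Rightarrow> real"
  assumes n: "n \<ge> 1" and q: "q \<ge> 1" and lam: "lam > 0" and sig: "\<sigma> > 0"
    and H3: "(fro n q (\<lambda>i k. E (i, k)))\<^sup>2 \<le> 4 * (real n * real q) * \<sigma>\<^sup>2"
    and Heta: "lam * norm21 p q Bs \<le> \<eta> * \<sigma>"
    and Hc: "sqrt_lasso_obj n p q X (obs p X Bs E) lam Bh \<le> sqrt_lasso_obj n p q X (obs p X Bs E) lam Bs"
  shows "fro n q (msub (obs p X Bs E) (matmul p X Bh)) \<le> sqrt (real n * real q) * (2 + \<eta>) * \<sigma>"
proof -
  define N where "N = sqrt (real n * real q)"
  define e where "e = fro n q (\<lambda>i k. E (i, k))"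
  define \<rho> where "\<rho> = fro n q (msub (obs p X Bs E) (matmul p X Bh))"
  have Np: "N > 0" unfolding N_def using n q by simp
  have e2: "e \<le> 2 * N * \<sigma>"
  proof (rule power2_le_imp_le)
    show "e\<^sup>2 \<le> (2 * N * \<sigma>)\<^sup>2" using H3 unfolding e_def N_def by (simp add: power_mult_distrib)
    show "0 \<le> 2 * N * \<sigma>" using Np sig by simp
  qed
  have "\<rho> / N + lam * norm21 p q Bh \<le> e / N + lam * norm21 p q Bs"
    using Hc unfolding sqrt_lasso_obj_def obj_at_Bs \<rho>_def e_def N_def .
  moreover have "lam * norm21 p q Bh \<ge> 0" using lam norm21_nonneg by simp
  ultimately have "\<rho> / N \<le> e / N + \<eta> * \<sigma>" using Heta by linarith
  then have "\<rho> \<le> e + N * \<eta> * \<sigma>" using Np by (simp add: field_simps)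
  also have "\<dots> \<le> 2 * N * \<sigma> + N * \<eta> * \<sigma>" using e2 by simp
  finally show ?thesis unfolding \<rho>_def N_def by (simp add: algebra_simps)
qed

lemma det_a:
  fixes n p q s :: nat and X Bs Bh :: "nat \<Rightarrow> nat \<Rightarrow> real" and E :: "nat \<times> nat \<Rightarrow> real"
    and \<sigma> \<alpha> lam \<eta> C :: real
  assumes n: "n \<ge> 1" and p: "p \<ge> 1" and q: "q \<ge> 1" and sig: "\<sigma> > 0"
    and s: "s \<ge> 1" and card: "card {j. j < p \<and> row_norm q Bs j \<noteq> 0} \<le> s"
    and a: "\<alpha> > 1"
    and gdiag: "\<forall>j<p. gram n X j j = 1"
    and gcoh: "\<forall>j<p. \<forall>j'<p. j' \<noteq> j \<longrightarrow> \<bar>gram n X j j'\<bar> \<le> 1 / (7 * \<alpha> * real s)"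
    and lam: "lam > 0" and eta: "\<eta> \<ge> 0" and Heta: "lam * norm21 p q Bs \<le> \<eta> * \<sigma>"
    and C: "C = 1 + 16 / (7 * (\<alpha> - 1))"
    and H1: "\<forall>j<p. L2_set (xt n X (\<lambda>i k. E (i, k)) j) {..<q} \<le> lam * (real n * real q) * \<sigma> / (2 * sqrt 2)"
    and H2: "real n * real q * \<sigma>\<^sup>2 / 2 \<le> (fro n q (\<lambda>i k. E (i, k)))\<^sup>2"
    and H3: "(fro n q (\<lambda>i k. E (i, k)))\<^sup>2 \<le> 4 * (real n * real q) * \<sigma>\<^sup>2"
    and min: "\<forall>B. sqrt_lasso_obj n p q X (obs p X Bs E) lam Bh \<le> sqrt_lasso_obj n p q X (obs p X Bs E) lam B"
  shows "good_estimate p q Bs Bh (C * (3 + \<eta>) * lam * \<sigma>)"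
proof (rule det_core[OF n p q sig s card a gdiag gcoh lam eta C H1 H2])
  show Hc: "sqrt_lasso_obj n p q X (obs p X Bs E) lam Bh \<le> sqrt_lasso_obj n p q X (obs p X Bs E) lam Bs"
    using min by blast
  have rho: "fro n q (msub (obs p X Bs E) (matmul p X Bh)) \<le> sqrt (real n * real q) * (2 + \<eta>) * \<sigma>"
    by (rule rho_bound[OF n q lam sig H3 Heta Hc])
  show "\<forall>j<p. L2_set (xt n X (msub (obs p X Bs E) (matmul p X Bh)) j) {..<q} \<le> lam * (real n * real q) * (2 + \<eta>) * \<sigma>"
  proof (intro allI impI)
    fix j assume j: "j < p"
    have "L2_set (xt n X (msub (obs p X Bs E) (matmul p X Bh)) j) {..<q}
        \<le> lam * sqrt (real n * real q) * fro n q (msub (obs p X Bs E) (matmul p X Bh))"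
    proof -
      have xn: "(\<Sum>i<n. (X i j)\<^sup>2) = real n" using gram_diag_sum[OF n] gdiag j by blast
      show ?thesis by (rule opt_a[OF n q lam j xn min])
    qed
    also have "\<dots> \<le> lam * sqrt (real n * real q) * (sqrt (real n * real q) * (2 + \<eta>) * \<sigma>)"
      using rho lam by (intro mult_left_mono) auto
    also have "\<dots> = lam * (real n * real q) * (2 + \<eta>) * \<sigma>"
      by (simp add: algebra_simps)
    finally show "L2_set (xt n X (msub (obs p X Bs E) (matmul p X Bh)) j) {..<q} \<le> lam * (real n * real q) * (2 + \<eta>) * \<sigma>" .
  qed
qed

lemma det_b:
  fixes n p q s :: nat and X Bs Bh :: "nat \<Rightarrow> nat \<Rightarrow> real" and E :: "nat \<times> nat \<Rightarrow> real"
    and \<sigma> \<alpha> lam \<eta> C \<sigma>min \<sigma>h :: real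
  assumes n: "n \<ge> 1" and p: "p \<ge> 1" and q: "q \<ge> 1" and sig: "\<sigma> > 0"
    and s: "s \<ge> 1" and card: "card {j. j < p \<and> row_norm q Bs j \<noteq> 0} \<le> s"
    and a: "\<alpha> > 1"
    and gdiag: "\<forall>j<p. gram n X j j = 1"
    and gcoh: "\<forall>j<p. \<forall>j'<p. j' \<noteq> j \<longrightarrow> \<bar>gram n X j j'\<bar> \<le> 1 / (7 * \<alpha> * real s)"
    and lam: "lam > 0" and eta: "\<eta> \<ge> 0" and Heta: "lam * norm21 p q Bs \<le> \<eta> * \<sigma>"
    and smin: "0 < \<sigma>min" "\<sigma>min \<le> \<sigma> / sqrt 2"
    and C: "C = 1 + 16 / (7 * (\<alpha> - 1))"
    and H1: "\<forall>j<p. L2_set (xt n X (\<lambda>i k. E (i, k)) j) {..<q} \<le> lam * (real n * real q) * \<sigma> / (2 * sqrt 2)"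
    and H2: "real n * real q * \<sigma>\<^sup>2 / 2 \<le> (fro n q (\<lambda>i k. E (i, k)))\<^sup>2"
    and H3: "(fro n q (\<lambda>i k. E (i, k)))\<^sup>2 \<le> 4 * (real n * real q) * \<sigma>\<^sup>2"
    and sh: "\<sigma>h \<ge> \<sigma>min"
    and min: "\<forall>B \<sigma>'. \<sigma>' \<ge> \<sigma>min \<longrightarrow> smooth_obj n p q X (obs p X Bs E) lam Bh \<sigma>h \<le> smooth_obj n p q X (obs p X Bs E) lam B \<sigma>'"
  shows "good_estimate p q Bs Bh (C * (3 + \<eta>) * lam * \<sigma>)"
proof -
  define N where "N = sqrt (real n * real q)"
  define K where "K = real n * real q"
  define e where "e = fro n q (\<lambda>i k. E (i, k))"
  define \<rho> where "\<rho> = fro n q (msub (obs p X Bs E) (matmul p X Bh))"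
  have Np: "N > 0" unfolding N_def using n q by simp
  have KN: "K = N\<^sup>2" unfolding K_def N_def by simp
  have shp: "\<sigma>h > 0" using sh smin by simp
  have e0: "e \<ge> 0" unfolding e_def by (rule fro_nonneg)
  have \<rho>0: "\<rho> \<ge> 0" unfolding \<rho>_def by (rule fro_nonneg)
  have eN: "e / N \<ge> \<sigma> / sqrt 2"
  proof -
    have "(N * \<sigma> / sqrt 2)\<^sup>2 = real n * real q * \<sigma>\<^sup>2 / 2"
      by (simp add: power_mult_distrib power_divide N_def)
    also have "\<dots> \<le> e\<^sup>2" using H2 unfolding e_def .
    finally have "N * \<sigma> / sqrt 2 \<le> e" using e0 by (rule power2_le_imp_le)
    then show ?thesis using Np by (simp add: field_simps)
  qed
  have ep: "e > 0" using eN sig Np by (smt (verit) divide_pos_pos real_sqrt_gt_zero divide_nonpos_pos)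
  have smooth_eq: "smooth_obj n p q X (obs p X Bs E) lam B \<sigma>' = \<rho>' \<^sup>2 / (2 * K * \<sigma>') + \<sigma>' / 2 + lam * norm21 p q B"
    if "\<rho>' = fro n q (msub (obs p X Bs E) (matmul p X B))" for B \<sigma>' \<rho>'
    unfolding smooth_obj_def K_def that by (simp add: mult.assoc)
  have amgm: "\<rho>'/N \<le> \<rho>' \<^sup>2 / (2 * K * \<sigma>') + \<sigma>' / 2" if "\<sigma>' > 0" for \<rho>' \<sigma>'
  proof -
    have "0 \<le> (\<rho>' / N - \<sigma>')\<^sup>2" by simp
    then have "2 * \<sigma>' * (\<rho>'/N) \<le> (\<rho>'/N)\<^sup>2 + \<sigma>'\<^sup>2" by (simp add: power2_eq_square algebra_simps)
    then have "2 * \<sigma>' * (\<rho>'/N) / (2 * \<sigma>') \<le> ((\<rho>'/N)\<^sup>2 + \<sigma>'\<^sup>2) / (2 * \<sigma>')"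
      using that by (intro divide_right_mono) auto
    also have "((\<rho>'/N)\<^sup>2 + \<sigma>'\<^sup>2) / (2 * \<sigma>') = \<rho>' \<^sup>2 / (2 * K * \<sigma>') + \<sigma>' / 2"
      unfolding KN using that Np by (simp add: power2_eq_square field_simps)
    finally show ?thesis using that by simp
  qed
  have Hc: "sqrt_lasso_obj n p q X (obs p X Bs E) lam Bh \<le> sqrt_lasso_obj n p q X (obs p X Bs E) lam Bs"
  proof -
    have "sqrt_lasso_obj n p q X (obs p X Bs E) lam Bh = \<rho> / N + lam * norm21 p q Bh"
      unfolding sqrt_lasso_obj_def \<rho>_def N_def ..
    also have "\<dots> \<le> \<rho>\<^sup>2 / (2 * K * \<sigma>h) + \<sigma>h / 2 + lam * norm21 p q Bh" using amgm[OF shp, of \<rho>] by simp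
    also have "\<dots> = smooth_obj n p q X (obs p X Bs E) lam Bh \<sigma>h" by (rule smooth_eq[symmetric]) (simp add: \<rho>_def)
    also have "\<dots> \<le> smooth_obj n p q X (obs p X Bs E) lam Bs (e / N)"
      using min smin eN by (meson order.trans)
    also have "\<dots> = e\<^sup>2 / (2 * K * (e / N)) + (e / N) / 2 + lam * norm21 p q Bs"
      by (rule smooth_eq) (simp add: obj_at_Bs e_def)
    also have "e\<^sup>2 / (2 * K * (e / N)) + (e / N) / 2 = e / N"
      unfolding KN using ep Np by (simp add: power2_eq_square field_simps)
    also have "e / N + lam * norm21 p q Bs = sqrt_lasso_obj n p q X (obs p X Bs E) lam Bs"
      unfolding sqrt_lasso_obj_def obj_at_Bs e_def N_def ..
    finally show ?thesis .
  qed
  have rho: "\<rho> \<le> N * (2 + \<eta>) * \<sigma>"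
    unfolding \<rho>_def N_def by (rule rho_bound[OF n q lam sig H3 Heta Hc])
  \<comment> \<open>optimality in sigma\<close>
  have shle: "\<sigma>h \<le> max \<sigma>min (\<rho> / N)"
  proof (rule ccontr)
    assume "\<not> ?thesis"
    then have gt: "\<sigma>h > max \<sigma>min (\<rho> / N)" by linarith
    define m where "m = max \<sigma>min (\<rho> / N)"
    have mp: "m > 0" unfolding m_def using smin by simp
    have mge: "m \<ge> \<sigma>min" unfolding m_def by simp
    have u: "\<rho>\<^sup>2 / K \<le> m\<^sup>2"
    proof -
      have "\<rho> / N \<le> m" unfolding m_def by simp
      then have "(\<rho> / N)\<^sup>2 \<le> m\<^sup>2" using \<rho>0 Np by (intro power_mono) auto
      then show ?thesis unfolding KN by (simp add: power_divide)
    qed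
    have "smooth_obj n p q X (obs p X Bs E) lam Bh \<sigma>h \<le> smooth_obj n p q X (obs p X Bs E) lam Bh m"
      using min mge by blast
    then have le: "\<rho>\<^sup>2 / (2 * K * \<sigma>h) + \<sigma>h / 2 \<le> \<rho>\<^sup>2 / (2 * K * m) + m / 2"
      using smooth_eq[of \<rho> Bh \<sigma>h] smooth_eq[of \<rho> Bh m] \<rho>_def by simp
    define u where "u = \<rho>\<^sup>2 / K"
    have Kp: "K > 0" unfolding KN using Np by simp
    have e1: "\<rho>\<^sup>2 / (2 * K * x) = u / (2 * x)" if "x > 0" for x
      unfolding u_def using Kp that by (simp add: field_simps)
    have "u / (2 * \<sigma>h) + \<sigma>h / 2 \<le> u / (2 * m) + m / 2"
      using le e1[OF shp] e1[OF mp] by simp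
    then have "(u / (2 * \<sigma>h) + \<sigma>h / 2) * (2 * \<sigma>h * m) \<le> (u / (2 * m) + m / 2) * (2 * \<sigma>h * m)"
      using shp mp by (intro mult_right_mono) auto
    moreover have "(u / (2 * \<sigma>h) + \<sigma>h / 2) * (2 * \<sigma>h * m) = u * m + \<sigma>h * \<sigma>h * m"
      using shp by (simp add: field_simps)
    moreover have "(u / (2 * m) + m / 2) * (2 * \<sigma>h * m) = u * \<sigma>h + m * \<sigma>h * m"
      using mp by (simp add: field_simps)
    ultimately have "u * m + \<sigma>h * \<sigma>h * m \<le> u * \<sigma>h + m * \<sigma>h * m" by simp
    then have "(\<sigma>h - m) * (\<sigma>h * m - u) \<le> 0" by (simp add: algebra_simps)
    moreover have "\<sigma>h - m > 0" using gt unfolding m_def by simp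
    moreover have "\<sigma>h * m - u > 0"
    proof -
      have "u \<le> m * m" using u unfolding u_def by (simp add: power2_eq_square)
      moreover have "m * m < \<sigma>h * m" using gt mp unfolding m_def by simp
      ultimately show ?thesis by simp
    qed
    ultimately show False by (simp add: mult_le_0_iff)
  qed
  have shb: "\<sigma>h \<le> (2 + \<eta>) * \<sigma>"
  proof -
    have "\<sigma>min \<le> (2 + \<eta>) * \<sigma>"
    proof -
      have "\<sigma> / sqrt 2 \<le> \<sigma>" using sig by (simp add: divide_le_eq)
      also have "\<sigma> \<le> (2 + \<eta>) * \<sigma>" using sig eta by simp
      finally show ?thesis using smin by simp
    qed
    moreover have "\<rho> / N \<le> (2 + \<eta>) * \<sigma>" using rho Np by (simp add: divide_le_eq mult.commute mult.left_commute)
    ultimately show ?thesis using shle by simp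
  qed
  have minB: "\<forall>B. smooth_obj n p q X (obs p X Bs E) lam Bh \<sigma>h \<le> smooth_obj n p q X (obs p X Bs E) lam B \<sigma>h"
    using min sh by blast
  show ?thesis
  proof (rule det_core[OF n p q sig s card a gdiag gcoh lam eta C H1 H2 Hc])
    show "\<forall>j<p. L2_set (xt n X (msub (obs p X Bs E) (matmul p X Bh)) j) {..<q} \<le> lam * (real n * real q) * (2 + \<eta>) * \<sigma>"
    proof (intro allI impI)
      fix j assume j: "j < p"
      have "L2_set (xt n X (msub (obs p X Bs E) (matmul p X Bh)) j) {..<q} \<le> lam * (real n * real q) * \<sigma>h"
      proof -
        have xn: "(\<Sum>i<n. (X i j)\<^sup>2) = real n" using gram_diag_sum[OF n] gdiag j by blast
        show ?thesis by (rule opt_b[OF n q lam j xn shp minB])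
      qed
      also have "\<dots> \<le> lam * (real n * real q) * ((2 + \<eta>) * \<sigma>)"
        using shb lam by (intro mult_left_mono) auto
      finally show "L2_set (xt n X (msub (obs p X Bs E) (matmul p X Bh)) j) {..<q} \<le> lam * (real n * real q) * (2 + \<eta>) * \<sigma>"
        by (simp add: mult.assoc)
    qed
  qed
qed

theorem proposition2:
  fixes n p q s :: nat
    and X Bs :: "nat \<Rightarrow> nat \<Rightarrow> real"
    and \<sigma>s \<alpha> A \<eta> \<sigma>min lam C :: real
  assumes "n \<ge> 1" "p \<ge> 1" "q \<ge> 1"
    and "\<sigma>s > 0"
    and "s \<ge> 1" "card {j. j < p \<and> row_norm q Bs j \<noteq> 0} \<le> s"
    and "\<alpha> > 1"
    and "\<forall>j<p. gram n X j j = 1"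
    and "\<forall>j<p. \<forall>j'<p. j' \<noteq> j \<longrightarrow> \<bar>gram n X j j'\<bar> \<le> 1 / (7 * \<alpha> * real s)"
    and "A > sqrt 2"
    and "lam = 2 * sqrt 2 / sqrt (real n * real q) * (1 + A * sqrt (ln (real p) / real q))"
    and "\<eta> > 0" "lam * norm21 p q Bs \<le> \<eta> * \<sigma>s"
    and "0 < \<sigma>min" "\<sigma>min \<le> \<sigma>s / sqrt 2"
    and "C = 1 + 16 / (7 * (\<alpha> - 1))"
  shows "\<exists>\<Omega> \<in> sets (noise_measure n q \<sigma>s).
           measure (noise_measure n q \<sigma>s) \<Omega>
             \<ge> 1 - real p powr (1 - A\<^sup>2 / 2) - (1 + exp 2) * exp (- (real n * real q) / 24)
         \<and> (\<forall>E \<in> \<Omega>.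
              (\<forall>Bh. (\<forall>B. sqrt_lasso_obj n p q X (obs p X Bs E) lam Bh
                          \<le> sqrt_lasso_obj n p q X (obs p X Bs E) lam B)
                 \<longrightarrow> good_estimate p q Bs Bh (C * (3 + \<eta>) * lam * \<sigma>s))
            \<and> (\<forall>Bh \<sigma>h. \<sigma>h \<ge> \<sigma>min \<and>
                   (\<forall>B \<sigma>. \<sigma> \<ge> \<sigma>min \<longrightarrow> smooth_obj n p q X (obs p X Bs E) lam Bh \<sigma>h
                          \<le> smooth_obj n p q X (obs p X Bs E) lam B \<sigma>)
                 \<longrightarrow> good_estimate p q Bs Bh (C * (3 + \<eta>) * lam * \<sigma>s)))"
proof -
  note n = assms(1) and p = assms(2) and q = assms(3) and sig = assms(4) and s = assms(5)
    and card = assms(6) and a = assms(7) and gdiag = assms(8) and gcoh = assms(9)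
    and Agt = assms(10) and lam_def = assms(11) and eta = assms(12) and Heta = assms(13)
    and smin = assms(14,15) and C = assms(16)
  let ?I = "{..<n} \<times> {..<q}"
  define M where "M = noise_measure n q \<sigma>s"
  have M_eq: "M = PiM ?I (\<lambda>_. gauss \<sigma>s)" unfolding M_def noise_measure_def ..
  interpret P: prob_space M
    unfolding M_eq using gauss_prob[OF sig] by (intro prob_space_PiM) auto
  have ln0: "ln (real p) \<ge> 0" using p by simp
  have A0: "A > 0" using Agt by (smt (verit) real_sqrt_ge_zero)
  define r where "r = 1 + A * sqrt (ln (real p) / real q)"
  have r1: "r \<ge> 1" unfolding r_def using A0 ln0 by simp
  have lam_r: "lam = 2 * sqrt 2 / sqrt (real n * real q) * r" unfolding lam_def r_def ..
  have Npos: "sqrt (real n * real q) > 0" using n q by simp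
  have lam: "lam > 0" unfolding lam_r using Npos r1 by simp
  have G0: "lam * (real n * real q) * \<sigma>s / (2 * sqrt 2) = sqrt (real n * real q) * \<sigma>s * r"
  proof -
    have "lam * (real n * real q) * \<sigma>s / (2 * sqrt 2) = r * \<sigma>s * ((real n * real q) / sqrt (real n * real q))"
      unfolding lam_r by (simp add: field_simps)
    also have "(real n * real q) / sqrt (real n * real q) = sqrt (real n * real q)"
      by (rule real_div_sqrt) simp
    finally show ?thesis by (simp add: algebra_simps)
  qed
  have bound_nonpos_or: "p = 1 \<or> p \<ge> 2" using p by linarith
  show ?thesis
  proof (cases "p = 1")
    case True
    have "1 - real p powr (1 - A\<^sup>2 / 2) - (1 + exp 2) * exp (- (real n * real q) / 24) \<le> 0"
      using True by (simp add: add_pos_pos)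
    then show ?thesis unfolding M_def[symmetric] by (intro bexI[of _ "{}"]) auto
  next
    case False
    then have p2: "p \<ge> 2" using p by linarith
    have lnp: "ln (real p) > 0" using p2 by simp
    have r1': "r > 1" unfolding r_def using A0 lnp q by simp
    define Fail where "Fail j = {\<omega> \<in> space M. \<sigma>s\<^sup>2 * real n * real q * r\<^sup>2 \<le> (\<Sum>k<q. (\<Sum>i<n. X i j * \<omega> (i, k))\<^sup>2)}" for j
    define Low where "Low = {\<omega> \<in> space M. (\<Sum>ik\<in>?I. (\<omega> ik)\<^sup>2) \<le> real (n * q) * \<sigma>s\<^sup>2 / 2}"
    define High where "High = {\<omega> \<in> space M. 4 * real (n * q) * \<sigma>s\<^sup>2 \<le> (\<Sum>ik\<in>?I. (\<omega> ik)\<^sup>2)}"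
    define U where "U = (\<Union>j<p. Fail j) \<union> Low \<union> High"
    define \<Omega> where "\<Omega> = space M - U"
    have Fail_sets: "Fail j \<in> sets M" for j unfolding Fail_def M_eq by measurable
    have Low_sets: "Low \<in> sets M" unfolding Low_def M_eq by measurable
    have High_sets: "High \<in> sets M" unfolding High_def M_eq by measurable
    have UF_sets: "(\<Union>j<p. Fail j) \<in> sets M" using Fail_sets by auto
    have U_sets: "U \<in> sets M" unfolding U_def using UF_sets Low_sets High_sets by auto
    have \<Omega>_sets: "\<Omega> \<in> sets M" unfolding \<Omega>_def using U_sets by auto
    have meas_le: "measure M S \<le> b" if "emeasure M S \<le> ennreal b" "b \<ge> 0" for S b
      using that by (simp add: P.emeasure_eq_measure)
    have fail_j: "measure M (Fail j) \<le> exp (- real q * (r - 1)\<^sup>2 / 2)" if j: "j < p" for j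
    proof (rule meas_le)
      have xn: "(\<Sum>i<n. (X i j)\<^sup>2) = real n" using gram_diag_sum[OF n] gdiag j by blast
      have "emeasure (PiM ?I (\<lambda>_. gauss \<sigma>s))
           {\<omega>\<in>space (PiM ?I (\<lambda>_. gauss \<sigma>s)). \<sigma>s\<^sup>2 * real n * real q * r\<^sup>2 \<le> (\<Sum>k<q. (\<Sum>i<n. X i j * \<omega> (i, k))\<^sup>2)}
         \<le> ennreal (exp (- real q * (r - 1)\<^sup>2 / 2))"
        by (rule chernoff_col[OF sig n q xn _ r1']) (use n in simp)
      then show "emeasure M (Fail j) \<le> ennreal (exp (- real q * (r - 1)\<^sup>2 / 2))"
        unfolding Fail_def M_eq .
    qed simp
    have eqexp: "exp (- real q * (r - 1)\<^sup>2 / 2) = real p powr (- A\<^sup>2 / 2)"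
    proof -
      have "(r - 1)\<^sup>2 = A\<^sup>2 * (ln (real p) / real q)"
        unfolding r_def using lnp q by (simp add: power_mult_distrib)
      then have "- real q * (r - 1)\<^sup>2 / 2 = - A\<^sup>2 / 2 * ln (real p)" using q by (simp add: field_simps)
      then show ?thesis using p by (simp add: powr_def)
    qed
    have UF: "measure M (\<Union>j<p. Fail j) \<le> real p powr (1 - A\<^sup>2 / 2)"
    proof -
      have "measure M (\<Union>j<p. Fail j) \<le> (\<Sum>j<p. measure M (Fail j))"
        by (rule P.finite_measure_subadditive_finite) (use Fail_sets in auto)
      also have "\<dots> \<le> (\<Sum>j<p. real p powr (- A\<^sup>2 / 2))"
      proof (rule sum_mono)
        fix j assume "j \<in> {..<p}"
        then have "measure M (Fail j) \<le> exp (- real q * (r - 1)\<^sup>2 / 2)" using fail_j by blast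
        then show "measure M (Fail j) \<le> real p powr (- A\<^sup>2 / 2)" unfolding eqexp .
      qed
      also have "\<dots> = real p * real p powr (- A\<^sup>2 / 2)" by simp
      also have "\<dots> = real p powr (1 - A\<^sup>2 / 2)"
      proof -
        have "real p powr (1 - A\<^sup>2 / 2) = real p powr (1 + (- A\<^sup>2 / 2))" by simp
        also have "\<dots> = real p powr 1 * real p powr (- A\<^sup>2 / 2)" by (rule powr_add)
        also have "real p powr 1 = real p" using p by simp
        finally show ?thesis by simp
      qed
      finally show ?thesis .
    qed
    have LowB: "measure M Low \<le> exp (- (real n * real q) / 24)"
    proof (rule meas_le)
      show "emeasure M Low \<le> ennreal (exp (- (real n * real q) / 24))"
        using chernoff_low[OF sig, of n q] unfolding Low_def M_eq by simp
    qed simp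
    have HighB: "measure M High \<le> exp (- (real n * real q) / 24)"
    proof (rule meas_le)
      show "emeasure M High \<le> ennreal (exp (- (real n * real q) / 24))"
        using chernoff_high[OF sig, of n q] unfolding High_def M_eq by simp
    qed simp
    have UB: "measure M U \<le> real p powr (1 - A\<^sup>2 / 2) + 2 * exp (- (real n * real q) / 24)"
    proof -
      have "measure M U \<le> measure M ((\<Union>j<p. Fail j) \<union> Low) + measure M High"
        unfolding U_def by (rule measure_Un_le) (use UF_sets Low_sets High_sets in auto)
      also have "measure M ((\<Union>j<p. Fail j) \<union> Low) \<le> measure M (\<Union>j<p. Fail j) + measure M Low"
        by (rule measure_Un_le) (use UF_sets Low_sets in auto)
      finally show ?thesis using UF LowB HighB by simp
    qed
    have prob\<Omega>: "measure M \<Omega> \<ge> 1 - real p powr (1 - A\<^sup>2 / 2) - (1 + exp 2) * exp (- (real n * real q) / 24)"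
    proof -
      have "measure M \<Omega> = 1 - measure M U" unfolding \<Omega>_def by (rule P.prob_compl[OF U_sets])
      moreover have "2 * exp (- (real n * real q) / 24) \<le> (1 + exp 2) * exp (- (real n * real q) / 24)"
      proof (rule mult_right_mono)
        have "(1::real) \<le> exp 2" by simp
        then show "2 \<le> 1 + exp (2::real)" by simp
      qed simp
      ultimately show ?thesis using UB by linarith
    qed
    have good: "(\<forall>Bh. (\<forall>B. sqrt_lasso_obj n p q X (obs p X Bs E) lam Bh
                          \<le> sqrt_lasso_obj n p q X (obs p X Bs E) lam B)
                 \<longrightarrow> good_estimate p q Bs Bh (C * (3 + \<eta>) * lam * \<sigma>s))
            \<and> (\<forall>Bh \<sigma>h. \<sigma>h \<ge> \<sigma>min \<and>
                   (\<forall>B \<sigma>. \<sigma> \<ge> \<sigma>min \<longrightarrow> smooth_obj n p q X (obs p X Bs E) lam Bh \<sigma>h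
                          \<le> smooth_obj n p q X (obs p X Bs E) lam B \<sigma>)
                 \<longrightarrow> good_estimate p q Bs Bh (C * (3 + \<eta>) * lam * \<sigma>s))" if E: "E \<in> \<Omega>" for E
    proof -
      have Esp: "E \<in> space M" and nF: "\<And>j. j < p \<Longrightarrow> E \<notin> Fail j" and nL: "E \<notin> Low" and nH: "E \<notin> High"
        using E unfolding \<Omega>_def U_def by auto
      have sumE: "(\<Sum>ik\<in>?I. (E ik)\<^sup>2) = (fro n q (\<lambda>i k. E (i, k)))\<^sup>2"
        unfolding fro_E_sq by (simp add: sum.cartesian_product)
      have H1: "\<forall>j<p. L2_set (xt n X (\<lambda>i k. E (i, k)) j) {..<q} \<le> lam * (real n * real q) * \<sigma>s / (2 * sqrt 2)"
      proof (intro allI impI)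
        fix j assume j: "j < p"
        have lt: "(\<Sum>k<q. (\<Sum>i<n. X i j * E (i, k))\<^sup>2) < \<sigma>s\<^sup>2 * real n * real q * r\<^sup>2"
          using nF[OF j] Esp unfolding Fail_def by auto
        have "L2_set (xt n X (\<lambda>i k. E (i, k)) j) {..<q} = sqrt (\<Sum>k<q. (\<Sum>i<n. X i j * E (i, k))\<^sup>2)"
          unfolding L2_set_def xt_def ..
        also have "\<dots> \<le> sqrt (\<sigma>s\<^sup>2 * real n * real q * r\<^sup>2)" using lt by simp
        also have "\<dots> = sqrt (real n * real q) * \<sigma>s * r"
          using sig r1 by (simp add: real_sqrt_mult)
        finally show "L2_set (xt n X (\<lambda>i k. E (i, k)) j) {..<q} \<le> lam * (real n * real q) * \<sigma>s / (2 * sqrt 2)"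
          unfolding G0 .
      qed
      have "\<not> (\<Sum>ik\<in>?I. (E ik)\<^sup>2) \<le> real (n * q) * \<sigma>s\<^sup>2 / 2"
        using nL Esp unfolding Low_def by auto
      then have H2: "real n * real q * \<sigma>s\<^sup>2 / 2 \<le> (fro n q (\<lambda>i k. E (i, k)))\<^sup>2"
        unfolding sumE by simp
      have "\<not> 4 * real (n * q) * \<sigma>s\<^sup>2 \<le> (\<Sum>ik\<in>?I. (E ik)\<^sup>2)"
        using nH Esp unfolding High_def by auto
      then have H3: "(fro n q (\<lambda>i k. E (i, k)))\<^sup>2 \<le> 4 * (real n * real q) * \<sigma>s\<^sup>2"
        unfolding sumE by simp
      have eta0: "\<eta> \<ge> 0" using eta by simp
      show ?thesis
      proof (intro conjI allI impI)
        fix Bh assume min: "\<forall>B. sqrt_lasso_obj n p q X (obs p X Bs E) lam Bh \<le> sqrt_lasso_obj n p q X (obs p X Bs E) lam B"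
        show "good_estimate p q Bs Bh (C * (3 + \<eta>) * lam * \<sigma>s)"
          by (rule det_a[OF n p q sig s card a gdiag gcoh lam eta0 Heta C H1 H2 H3 min])
      next
        fix Bh \<sigma>h assume h: "\<sigma>min \<le> \<sigma>h \<and> (\<forall>B \<sigma>. \<sigma>min \<le> \<sigma> \<longrightarrow> smooth_obj n p q X (obs p X Bs E) lam Bh \<sigma>h \<le> smooth_obj n p q X (obs p X Bs E) lam B \<sigma>)"
        show "good_estimate p q Bs Bh (C * (3 + \<eta>) * lam * \<sigma>s)"
          by (rule det_b[OF n p q sig s card a gdiag gcoh lam eta0 Heta smin C H1 H2 H3]) (use h in auto)
      qed
    qed
    show ?thesis
      unfolding M_def[symmetric] using \<Omega>_sets prob\<Omega> good by blast
  qed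
qed

end
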